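(* Let $p\in\mathbb{C}[X_1,\dots,X_d,T]$. If $N_{\mathcal{L}(\mathcal{D}(\mathbb{R}),\mathcal{S}'(\mathbb{R}^d))}(p)=\{0\}$, then $V(C_{\mathbf{X}}(p))\cap i\mathbb{R}^d=\emptyset$.
   Context: Coordinates on $\mathbb{R}^{d+1}$ are $(\mathbf{x},t)$, $\mathbf{x}\in\mathbb{R}^d$, $t\in\mathbb{R}$, and $\mathbf{X}=(X_1,\dots,X_d)$. $\mathcal{L}(\mathcal{D}(\mathbb{R}),\mathcal{S}'(\mathbb{R}^d))$ is the space of continuous linear maps from $\mathcal{D}(\mathbb{R})$ (inductive limit topology) to $\mathcal{S}'(\mathbb{R}^d)$ (weak-* topology) — the "distributions tempered in the spatial directions"; each such $u$ is identified with the unique $U\in\mathcal{D}'(\mathbb{R}^{d+1})$ with $\langle U,\varphi\otimes\psi\rangle=\langle u(\varphi),\psi\rangle$ for $\varphi\in\mathcal{D}(\mathbb{R})$, $\psi\in\mathcal{D}(\mathbb{R}^d)$, so it is a subspace of $\mathcal{D}'(\mathbb{R}^{d+1})$ (derivatives in $x_k$ and $t$ are the distributional ones). For $p\in\mathbb{C}[\mathbf{X},T]$, $D_p=p\left(\frac{\partial}{\partial x_1},\dots,\frac{\partial}{\partial x_d},\frac{\partial}{\partial t}\right)$, and for a subspace $S\subset\mathcal{D}'(\mathbb{R}^{d+1})$, $N_S(p)=\{u\in S: D_pu=0,\ u|_{t<0}=0\}$, where $u|_{t<0}$ is the restriction to $\{t<0\}$. Writing $p=a_0+a_1T+\dots+a_nT^n$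 with $a_j\in\mathbb{C}[\mathbf{X}]$, the $\mathbf{X}$-content $C_{\mathbf{X}}(p)$ is the ideal of $\mathbb{C}[\mathbf{X}]$ generated by $a_0,\dots,a_n$. For a set $I\subset\mathbb{C}[\mathbf{X}]$, $V(I)=\{\boldsymbol{\xi}\in\mathbb{C}^d: q(\boldsymbol{\xi})=0\ \forall q\in I\}$. *)

theory Defs
  imports "HOL-Analysis.Analysis" "HOL-Library.Poly_Mapping"
          "HOL-Computational_Algebra.Polynomial"
begin

definition dpart :: "'a::euclidean_space \<Rightarrow> ('a \<Rightarrow> complex) \<Rightarrow> 'a \<Rightarrow> complex" where
  "dpart b f x = vector_derivative (\<lambda>s::real. f (x + s *\<^sub>R b)) (at 0)"

primrec diter :: "'a::euclidean_space list \<Rightarrow> ('a \<Rightarrow> complex) \<Rightarrow> 'a \<Rightarrow> complex" where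
  "diter [] f = f"
| "diter (b # bs) f = dpart b (diter bs f)"

definition smooth_fun :: "('a::euclidean_space \<Rightarrow> complex) \<Rightarrow> bool" where
  "smooth_fun f \<longleftrightarrow>
     (\<forall>bs. set bs \<subseteq> Basis \<longrightarrow>
        continuous_on UNIV (diter bs f) \<and>
        (\<forall>b\<in>Basis. \<forall>x. (\<lambda>s::real. diter bs f (x + s *\<^sub>R b)) differentiable (at 0)))"

definition tsupport :: "('a::euclidean_space \<Rightarrow> complex) \<Rightarrow> 'a set" where
  "tsupport f = closure {x. f x \<noteq> 0}"

definition test_fun :: "('a::euclidean_space \<Rightarrow> complex) \<Rightarrow> bool" where
  "test_fun f \<longleftrightarrow> smooth_fun f \<and> compact (tsupport f)"

definition schwartz_fun :: "('a::euclidean_space \<Rightarrow> complex) \<Rightarrow> bool" where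
  "schwartz_fun f \<longleftrightarrow> smooth_fun f \<and>
     (\<forall>k::nat. \<forall>bs. set bs \<subseteq> Basis \<longrightarrow>
        bounded (range (\<lambda>x. norm x ^ k * norm (diter bs f x))))"

text \<open>A (generalised) function is represented by a functional on all functions which is
  canonically 0 outside its domain of test functions.\<close>

definition Cseminorm :: "nat \<Rightarrow> ('a::euclidean_space \<Rightarrow> complex) \<Rightarrow> real" where
  "Cseminorm N f = Sup {norm (diter bs f x) | bs x. set bs \<subseteq> Basis \<and> length bs \<le> N}"

definition Sseminorm :: "nat \<Rightarrow> ('a::euclidean_space \<Rightarrow> complex) \<Rightarrow> real" where
  "Sseminorm N f =
     Sup {(1 + norm x) ^ N * norm (diter bs f x) | bs x. set bs \<subseteq> Basis \<and> length bs \<le> N}"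

text \<open>\<open>\<D>'\<close>: linear functionals on test functions, continuous for the inductive limit
  topology (standard seminorm characterisation).\<close>
definition distribution :: "(('a::euclidean_space \<Rightarrow> complex) \<Rightarrow> complex) \<Rightarrow> bool" where
  "distribution U \<longleftrightarrow>
     (\<forall>\<phi>. \<not> test_fun \<phi> \<longrightarrow> U \<phi> = 0) \<and>
     (\<forall>\<phi> g a b. test_fun \<phi> \<longrightarrow> test_fun g \<longrightarrow>
        U (\<lambda>x. a * \<phi> x + b * g x) = a * U \<phi> + b * U g) \<and>
     (\<forall>K. compact K \<longrightarrow> (\<exists>C N. \<forall>\<phi>. test_fun \<phi> \<and> tsupport \<phi> \<subseteq> K \<longrightarrow>
        norm (U \<phi>) \<le> C * Cseminorm N \<phi>))"

definition tempered :: "(('a::euclidean_space \<Rightarrow> complex) \<Rightarrow> complex) \<Rightarrow> bool" where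
  "tempered T \<longleftrightarrow>
     (\<forall>\<psi>. \<not> schwartz_fun \<psi> \<longrightarrow> T \<psi> = 0) \<and>
     (\<forall>\<psi> g a b. schwartz_fun \<psi> \<longrightarrow> schwartz_fun g \<longrightarrow>
        T (\<lambda>x. a * \<psi> x + b * g x) = a * T \<psi> + b * T g) \<and>
     (\<exists>C N. \<forall>\<psi>. schwartz_fun \<psi> \<longrightarrow> norm (T \<psi>) \<le> C * Sseminorm N \<psi>)"

text \<open>\<open>\<L>(\<D>(\<real>), \<S>'(\<real>^d))\<close>: linear maps from test functions on \<real> to tempered distributions,
  continuous for the inductive limit topology on \<open>\<D>(\<real>)\<close> and the weak-* topology on \<open>\<S>'\<close>
  (i.e. each \<open>\<phi> \<mapsto> \<langle>u \<phi>, \<psi>\<rangle>\<close>, \<psi> Schwartz, is continuous on \<open>\<D>(\<real>)\<close>).\<close>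
definition spat_tempered_map ::
    "((real \<Rightarrow> complex) \<Rightarrow> ((real^'d \<Rightarrow> complex) \<Rightarrow> complex)) \<Rightarrow> bool" where
  "spat_tempered_map u \<longleftrightarrow>
     (\<forall>\<phi>. \<not> test_fun \<phi> \<longrightarrow> u \<phi> = (\<lambda>_. 0)) \<and>
     (\<forall>\<phi>. test_fun \<phi> \<longrightarrow> tempered (u \<phi>)) \<and>
     (\<forall>\<phi> g a b. test_fun \<phi> \<longrightarrow> test_fun g \<longrightarrow>
        u (\<lambda>t. a * \<phi> t + b * g t) = (\<lambda>\<psi>. a * u \<phi> \<psi> + b * u g \<psi>)) \<and>
     (\<forall>\<psi>. schwartz_fun \<psi> \<longrightarrow> distribution (\<lambda>\<phi>. u \<phi> \<psi>))"

text \<open>The subspace of \<open>\<D>'(\<real>^(d+1))\<close> (coordinates (x,t)) identified with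
  \<open>\<L>(\<D>(\<real>), \<S>'(\<real>^d))\<close> via \<open>\<langle>U, \<phi>\<otimes>\<psi>\<rangle> = \<langle>u(\<phi>), \<psi>\<rangle>\<close>.\<close>
definition LDS :: "(((real^('d::finite)) \<times> real \<Rightarrow> complex) \<Rightarrow> complex) set" where
  "LDS = {U. distribution U \<and>
     (\<exists>u::(real \<Rightarrow> complex) \<Rightarrow> ((real^('d::finite) \<Rightarrow> complex) \<Rightarrow> complex). spat_tempered_map u \<and>
        (\<forall>\<phi> \<psi>. test_fun \<phi> \<longrightarrow> test_fun \<psi> \<longrightarrow> U (\<lambda>(x, t). \<phi> t * \<psi> x) = u \<phi> \<psi>))}"

text \<open>\<open>\<complex>[X]\<close> is \<open>('d \<Rightarrow>\<^sub>0 nat) \<Rightarrow>\<^sub>0 complex\<close> (monomial exponents to coefficients);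
  \<open>\<complex>[X,T] = \<complex>[X][T]\<close>, so \<open>p = a_0 + a_1 T + \<dots> + a_n T^n\<close> with \<open>a_j = coeff p j\<close>.\<close>
type_synonym 'd mpoly = "('d \<Rightarrow>\<^sub>0 nat) \<Rightarrow>\<^sub>0 complex"

definition mpeval :: "('d::finite) mpoly \<Rightarrow> complex^'d \<Rightarrow> complex" where
  "mpeval q \<xi> = (\<Sum>\<alpha>\<in>Poly_Mapping.keys q. Poly_Mapping.lookup q \<alpha> * (\<Prod>i\<in>UNIV. (\<xi> $ i) ^ Poly_Mapping.lookup \<alpha> i))"

definition ideal_gen :: "'a::comm_ring_1 set \<Rightarrow> 'a set" where
  "ideal_gen A = {(\<Sum>a\<in>F. r a * a) | F r. finite F \<and> F \<subseteq> A}"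

definition Xcontent :: "'d mpoly poly \<Rightarrow> 'd mpoly set" where
  "Xcontent p = ideal_gen {coeff p j | j. j \<le> degree p}"

definition Vzero :: "('d::finite) mpoly set \<Rightarrow> (complex^'d) set" where
  "Vzero I = {\<xi>. \<forall>q\<in>I. mpeval q \<xi> = 0}"

definition imag_axis_space :: "(complex^'d) set" where
  "imag_axis_space = {\<chi> i. \<i> * complex_of_real (y $ i) | y :: real^'d. True}"

definition ex :: "'d::finite \<Rightarrow> (real^'d) \<times> real" where "ex i = (axis i 1, 0)"
definition et :: "(real^'d) \<times> real" where "et = (0, 1)"

text \<open>A list of directions realising \<open>\<partial>_x^m \<partial>_t^j\<close> (order is immaterial on smooth functions).\<close>
definition dlist :: "('d::finite \<Rightarrow>\<^sub>0 nat) \<Rightarrow> nat \<Rightarrow> ((real^'d) \<times> real) list" where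
  "dlist m j = (SOME bs. set bs \<subseteq> insert et (range ex) \<and>
      (\<forall>i. count_list bs (ex i) = Poly_Mapping.lookup m i) \<and> count_list bs et = j)"

text \<open>\<open>D_p U\<close> in the sense of distributions: \<open>\<langle>\<partial>^\<alpha> U, \<phi>\<rangle> = (-1)^|\<alpha>| \<langle>U, \<partial>^\<alpha> \<phi>\<rangle>\<close>.\<close>
definition Dop :: "('d::finite) mpoly poly \<Rightarrow> (((real^'d) \<times> real \<Rightarrow> complex) \<Rightarrow> complex)
                   \<Rightarrow> (((real^'d) \<times> real \<Rightarrow> complex) \<Rightarrow> complex)" where
  "Dop p U = (\<lambda>\<phi>. if test_fun \<phi> then
      (\<Sum>j\<le>degree p. \<Sum>m\<in>Poly_Mapping.keys (coeff p j).
         Poly_Mapping.lookup (coeff p j) m * (-1) ^ length (dlist m j) * U (diter (dlist m j) \<phi>))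
    else 0)"

definition vanishes_neg_time :: "(((real^'d) \<times> real \<Rightarrow> complex) \<Rightarrow> complex) \<Rightarrow> bool" where
  "vanishes_neg_time U \<longleftrightarrow>
     (\<forall>\<phi>. test_fun \<phi> \<and> tsupport \<phi> \<subseteq> {z. snd z < 0} \<longrightarrow> U \<phi> = 0)"

definition Nsp :: "(((real^'d) \<times> real \<Rightarrow> complex) \<Rightarrow> complex) set \<Rightarrow> ('d::finite) mpoly poly
                   \<Rightarrow> (((real^'d) \<times> real \<Rightarrow> complex) \<Rightarrow> complex) set" where
  "Nsp S p = {U\<in>S. Dop p U = (\<lambda>_. 0) \<and> vanishes_neg_time U}"

end

theory Submission
  imports Defs "HOL-Probability.Sinc_Integral"
begin


lemma diter_append: "diter (xs @ ys) f = diter xs (diter ys f)"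
  by (induct xs) auto

lemma smooth_coind:
  assumes "f \<in> S" and "\<And>g. g \<in> S \<Longrightarrow> continuous_on UNIV g"
  and "\<And>g b x. g \<in> S \<Longrightarrow> b \<in> Basis \<Longrightarrow> (\<lambda>s::real. g (x + s *\<^sub>R b)) differentiable (at 0)"
  and "\<And>g b. g \<in> S \<Longrightarrow> b \<in> Basis \<Longrightarrow> dpart b g \<in> S"
  shows "smooth_fun f"
proof -
  have "set bs \<subseteq> Basis \<Longrightarrow> diter bs f \<in> S" for bs by (induct bs) (auto intro: assms)
  thus ?thesis unfolding smooth_fun_def using assms(2,3) by simp
qed

lemma smooth_cont: "smooth_fun f \<Longrightarrow> continuous_on UNIV f"
  unfolding smooth_fun_def by (drule spec[of _ "[]"]) simp

lemma smooth_diffble: "smooth_fun f \<Longrightarrow> b \<in> Basis \<Longrightarrow> (\<lambda>s::real. f (x + s *\<^sub>R b)) differentiable (at 0)"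
  unfolding smooth_fun_def by (drule spec[of _ "[]"]) simp

lemma smooth_dpart: assumes "smooth_fun f" "b \<in> Basis" shows "smooth_fun (dpart b f)"
  unfolding smooth_fun_def
proof (intro allI impI)
  fix bs :: "'a list" assume "set bs \<subseteq> Basis"
  then have "set (bs @ [b]) \<subseteq> Basis" using assms by auto
  then show "continuous_on UNIV (diter bs (dpart b f)) \<and>
         (\<forall>c\<in>Basis. \<forall>x. (\<lambda>s. diter bs (dpart b f) (x + s *\<^sub>R c)) differentiable at 0)"
    using assms(1) unfolding smooth_fun_def diter_append[symmetric]
    by (drule_tac spec[of _ "bs @ [b]"]) (simp add: diter_append)
qed

lemma smooth_diter: "smooth_fun f \<Longrightarrow> set bs \<subseteq> Basis \<Longrightarrow> smooth_fun (diter bs f)"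
  by (induct bs) (auto intro: smooth_dpart)

lemma smooth_hasderiv: "smooth_fun f \<Longrightarrow> b \<in> Basis \<Longrightarrow>
   ((\<lambda>s::real. f (x + s *\<^sub>R b)) has_vector_derivative dpart b f x) (at 0)"
  unfolding dpart_def using smooth_diffble vector_derivative_works by blast

lemma dpart_eq: "((\<lambda>s::real. f (x + s *\<^sub>R b)) has_vector_derivative D) (at 0) \<Longrightarrow> dpart b f x = D"
  unfolding dpart_def by (rule vector_derivative_at)

lemma smooth_const: "smooth_fun (\<lambda>_::'a::euclidean_space. c)"
proof (rule smooth_coind[where S="range (\<lambda>c::complex. (\<lambda>x::'a. c))"])
  fix g and b :: 'a assume "g \<in> range (\<lambda>c::complex. (\<lambda>x::'a. c))" "b \<in> (Basis::'a set)"
  then obtain c where g: "g = (\<lambda>x. c)" by auto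
  have "dpart b g = (\<lambda>x. 0)"
    by (rule ext, rule dpart_eq) (simp add: g)
  then show "dpart b g \<in> range (\<lambda>c::complex. (\<lambda>x::'a. c))" by auto
qed auto



definition SP :: "(('a \<Rightarrow> complex) \<times> ('a \<Rightarrow> complex)) list \<Rightarrow> 'a \<Rightarrow> complex" where
  "SP L x = sum_list (map (\<lambda>(f,g). f x * g x) L)"

definition dl :: "'a::euclidean_space \<Rightarrow> (('a \<Rightarrow> complex) \<times> ('a \<Rightarrow> complex)) list \<Rightarrow> (('a \<Rightarrow> complex) \<times> ('a \<Rightarrow> complex)) list" where
  "dl b L = concat (map (\<lambda>(f,g). [(dpart b f, g), (f, dpart b g)]) L)"

lemma SP_simps[simp]: "SP [] x = 0" "SP ((f,g)#L) x = f x * g x + SP L x"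
  by (auto simp: SP_def)

lemma dl_simps[simp]: "dl b [] = []" "dl b ((f,g)#L) = (dpart b f, g) # (f, dpart b g) # dl b L"
  by (auto simp: dl_def)

lemma SP_deriv:
  assumes "\<forall>(f,g)\<in>set L. smooth_fun f \<and> smooth_fun g" "b \<in> Basis"
  shows "((\<lambda>s. SP L (x + s *\<^sub>R b)) has_vector_derivative SP (dl b L) x) (at 0)"
  using assms(1)
proof (induct L)
  case Nil
  then show ?case by (simp add: has_vector_derivative_const)
next
  case (Cons a L)
  obtain f g where a: "a = (f,g)" by (cases a)
  with Cons have f: "smooth_fun f" and g: "smooth_fun g" by auto
  have "((\<lambda>s. f (x + s *\<^sub>R b) * g (x + s *\<^sub>R b)) has_vector_derivative
         (f x * dpart b g x + dpart b f x * g x)) (at 0)"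
    using has_vector_derivative_mult[OF smooth_hasderiv[OF f assms(2)] smooth_hasderiv[OF g assms(2)]]
    by simp
  from has_vector_derivative_add[OF this Cons(1)] Cons(2) show ?case
    by (simp add: a algebra_simps)
qed

lemma dl_smooth: fixes b :: "'a::euclidean_space" shows "\<forall>(f,g)\<in>set L. smooth_fun f \<and> smooth_fun g \<Longrightarrow> b \<in> Basis \<Longrightarrow>
  \<forall>(f,g)\<in>set (dl b L). smooth_fun f \<and> smooth_fun g"
  by (induct L) (auto intro: smooth_dpart)

lemma SP_cont: "\<forall>(f,g)\<in>set L. smooth_fun f \<and> smooth_fun g \<Longrightarrow> continuous_on UNIV (SP L)"
proof (induct L)
  case Nil
  then show ?case by (simp add: SP_def)
next
  case (Cons a L)
  obtain f g where a: "a = (f,g)" by (cases a)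
  with Cons have "continuous_on UNIV f" "continuous_on UNIV g" "continuous_on UNIV (SP L)"
    by (auto intro: smooth_cont)
  then have "continuous_on UNIV (\<lambda>x. f x * g x + SP L x)"
    by (intro continuous_intros) auto
  then show ?case by (simp add: a)
qed

lemma smooth_SP:
  fixes L :: "(('a::euclidean_space \<Rightarrow> complex) \<times> ('a \<Rightarrow> complex)) list"
  assumes "\<forall>(f,g)\<in>set L. smooth_fun f \<and> smooth_fun g"
  shows "smooth_fun (SP L)"
proof (rule smooth_coind[where S="{(SP L :: 'a \<Rightarrow> complex) | L. \<forall>(f,g)\<in>set L. smooth_fun f \<and> smooth_fun g}"])
  show "SP L \<in> {(SP L :: 'a \<Rightarrow> complex) | L. \<forall>(f,g)\<in>set L. smooth_fun f \<and> smooth_fun g}" using assms by auto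
next
  fix h assume "h \<in> {(SP L :: 'a \<Rightarrow> complex) | L. \<forall>(f,g)\<in>set L. smooth_fun f \<and> smooth_fun g}"
  then show "continuous_on UNIV h" using SP_cont by auto
next
  fix h and b x :: 'a assume "h \<in> {(SP L :: 'a \<Rightarrow> complex) | L. \<forall>(f,g)\<in>set L. smooth_fun f \<and> smooth_fun g}" "b \<in> Basis"
  then show "(\<lambda>s::real. h (x + s *\<^sub>R b)) differentiable (at 0)"
    using SP_deriv differentiableI_vector by blast
next
  fix h and b :: 'a assume h: "h \<in> {(SP L :: 'a \<Rightarrow> complex) | L. \<forall>(f,g)\<in>set L. smooth_fun f \<and> smooth_fun g}" and b: "b \<in> Basis"
  then obtain L where L: "h = SP L" "\<forall>(f,g)\<in>set L. smooth_fun f \<and> smooth_fun g" by auto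
  have "dpart b h = SP (dl b L)"
    by (rule ext, unfold L(1), rule dpart_eq, rule SP_deriv[OF L(2) b])
  then show "dpart b h \<in> {(SP L :: 'a \<Rightarrow> complex) | L. \<forall>(f,g)\<in>set L. smooth_fun f \<and> smooth_fun g}"
    using dl_smooth[OF L(2) b] by auto
qed

lemma smooth_mult: "smooth_fun f \<Longrightarrow> smooth_fun g \<Longrightarrow> smooth_fun (\<lambda>x. f x * g x)"
proof -
  assume "smooth_fun f" "smooth_fun g"
  then have "smooth_fun (SP [(f,g)])" by (intro smooth_SP) auto
  moreover have "SP [(f,g)] = (\<lambda>x. f x * g x)" by (rule ext) simp
  ultimately show ?thesis by simp
qed

lemma smooth_add: "smooth_fun f \<Longrightarrow> smooth_fun g \<Longrightarrow> smooth_fun (\<lambda>x. f x + g x)"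
proof -
  assume "smooth_fun f" "smooth_fun g"
  then have "smooth_fun (SP [(f,\<lambda>_. 1),(g,\<lambda>_. 1)])" by (intro smooth_SP) (auto intro: smooth_const)
  moreover have "SP [(f,\<lambda>_. 1),(g,\<lambda>_. 1)] = (\<lambda>x. f x + g x)" by (rule ext) simp
  ultimately show ?thesis by simp
qed

lemma smooth_cmult: "smooth_fun f \<Longrightarrow> smooth_fun (\<lambda>x. c * f x)"
  using smooth_mult[OF smooth_const, of f c] by simp

lemma smooth_lincomp:
  fixes L :: "'a::euclidean_space \<Rightarrow> 'b::euclidean_space"
  assumes h: "smooth_fun h" and L: "linear L"
    and LB: "\<And>b. b \<in> Basis \<Longrightarrow> \<exists>c b'. b' \<in> Basis \<and> L b = c *\<^sub>R b'"
  shows "smooth_fun (\<lambda>x. k * h (L x))"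
proof -
  let ?S = "{(\<lambda>x. k * h (L x)) | k h. smooth_fun h}"
  have cL: "continuous_on UNIV L"
    using L by (simp add: linear_continuous_on linear_conv_bounded_linear)
  have D: "((\<lambda>s. k * h (L (x + s *\<^sub>R b))) has_vector_derivative (k * of_real c * dpart b' h (L x))) (at 0)"
    if "smooth_fun h" "b' \<in> Basis" "L b = c *\<^sub>R b'" for k and h :: "'b \<Rightarrow> complex" and b x :: 'a and b' :: 'b and c
  proof -
    have e: "(\<lambda>s. k * h (L (x + s *\<^sub>R b))) = (\<lambda>s. k * ((\<lambda>r. h (L x + r *\<^sub>R b')) \<circ> (\<lambda>s. c * s)) s)"
      using that(3) L by (auto simp: linear_add linear_scale o_def ac_simps)
    have "((\<lambda>s. c * s) has_vector_derivative c) (at 0)"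
      by (auto intro!: derivative_eq_intros simp: has_real_derivative_iff_has_vector_derivative[symmetric])
    from vector_diff_chain_at[OF this, of "\<lambda>r. h (L x + r *\<^sub>R b')"] smooth_hasderiv[OF that(1,2), of "L x"]
    have "(((\<lambda>r. h (L x + r *\<^sub>R b')) \<circ> (\<lambda>s. c * s)) has_vector_derivative c *\<^sub>R dpart b' h (L x)) (at 0)"
      by simp
    from has_vector_derivative_mult_right[OF this, of k] show ?thesis
      unfolding e by (simp add: scaleR_conv_of_real mult.assoc)
  qed
  show ?thesis
  proof (rule smooth_coind[where S="?S"])
    show "(\<lambda>x. k * h (L x)) \<in> ?S" using h by auto
  next
    fix g assume "g \<in> ?S"
    then obtain k h where g: "g = (\<lambda>x. k * h (L x))" "smooth_fun h" by auto
    show "continuous_on UNIV g" unfolding g(1)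
      by (intro continuous_intros continuous_on_compose2[OF smooth_cont[OF g(2)] cL]) auto
  next
    fix g and b x :: 'a assume "g \<in> ?S" and b: "b \<in> Basis"
    then obtain k h where g: "g = (\<lambda>x. k * h (L x))" "smooth_fun h" by auto
    obtain c b' where "b' \<in> Basis" "L b = c *\<^sub>R b'" using LB[OF b] by auto
    from D[OF g(2) this] show "(\<lambda>s::real. g (x + s *\<^sub>R b)) differentiable (at 0)"
      unfolding g(1) using differentiableI_vector by blast
  next
    fix g and b :: 'a assume "g \<in> ?S" and b: "b \<in> Basis"
    then obtain k h where g: "g = (\<lambda>x. k * h (L x))" "smooth_fun h" by auto
    obtain c b' where cb: "b' \<in> Basis" "L b = c *\<^sub>R b'" using LB[OF b] by auto
    have "dpart b g = (\<lambda>x. (k * of_real c) * dpart b' h (L x))"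
      by (rule ext, unfold g(1), rule dpart_eq, rule D[OF g(2) cb])
    then show "dpart b g \<in> ?S" using smooth_dpart[OF g(2) cb(1)] by blast
  qed
qed



lemma vd_affine:
  fixes g :: "real \<Rightarrow> 'v::real_normed_vector"
  assumes "(g has_vector_derivative D) (at (a + c * t))"
  shows "((\<lambda>s. g (a + c * s)) has_vector_derivative c *\<^sub>R D) (at t)"
proof -
  have "((\<lambda>s. a + c * s) has_vector_derivative c) (at t)"
    by (auto intro!: derivative_eq_intros simp: has_real_derivative_iff_has_vector_derivative[symmetric])
  from vector_diff_chain_at[OF this, of g] assms show ?thesis by (simp add: o_def)
qed

lemma smooth1_seq:
  fixes F :: "nat \<Rightarrow> real \<Rightarrow> complex"
  assumes "\<And>n x. (F n has_vector_derivative F (Suc n) x) (at x)"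
  shows "smooth_fun (F n)"
proof (rule smooth_coind[where S="range F"])
  fix g assume "g \<in> range F"
  then obtain n where g: "g = F n" by auto
  have "F n differentiable_on UNIV"
    using assms differentiableI_vector differentiable_at_imp_differentiable_on by blast
  then show "continuous_on UNIV g" unfolding g by (rule differentiable_imp_continuous_on)
next
  fix g b x assume "g \<in> range F" "b \<in> (Basis :: real set)"
  then obtain n where g: "g = F n" and b: "b = 1" by auto
  have "((\<lambda>s. F n (x + 1 * s)) has_vector_derivative 1 *\<^sub>R F (Suc n) x) (at 0)"
    by (rule vd_affine) (simp add: assms)
  then show "(\<lambda>s::real. g (x + s *\<^sub>R b)) differentiable (at 0)"
    unfolding g b using differentiableI_vector by auto
next
  fix g b assume "g \<in> range F" "b \<in> (Basis :: real set)"
  then obtain n where g: "g = F n" and b: "b = 1" by auto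
  have "dpart b g = F (Suc n)"
  proof
    fix x
    have "((\<lambda>s. F n (x + 1 * s)) has_vector_derivative 1 *\<^sub>R F (Suc n) x) (at 0)"
      by (rule vd_affine) (simp add: assms)
    then show "dpart b g x = F (Suc n) x" unfolding g b by (intro dpart_eq) simp
  qed
  then show "dpart b g \<in> range F" by auto
qed auto

lemma smooth_translate:
  fixes h :: "'a::euclidean_space \<Rightarrow> complex"
  assumes "smooth_fun h" shows "smooth_fun (\<lambda>x. h (x + a))"
proof (rule smooth_coind[where S="{(\<lambda>x. h (x + a)) | h. smooth_fun h}"])
  show "(\<lambda>x. h (x + a)) \<in> {(\<lambda>x. h (x + a)) | h. smooth_fun h}" using assms by auto
next
  fix g assume "g \<in> {(\<lambda>x. h (x + a)) | h. smooth_fun h}"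
  then obtain h where g: "g = (\<lambda>x. h (x + a))" "smooth_fun h" by auto
  show "continuous_on UNIV g" unfolding g(1)
    by (intro continuous_on_compose2[OF smooth_cont[OF g(2)]] continuous_intros) auto
next
  fix g and b x :: 'a assume "g \<in> {(\<lambda>x. h (x + a)) | h. smooth_fun h}" "b \<in> Basis"
  then obtain h where g: "g = (\<lambda>x. h (x + a))" "smooth_fun h" and b: "b \<in> Basis" by auto
  from smooth_hasderiv[OF g(2) b, of "x + a"]
  show "(\<lambda>s::real. g (x + s *\<^sub>R b)) differentiable (at 0)"
    unfolding g(1) using differentiableI_vector by (simp add: ac_simps)
next
  fix g and b :: 'a assume "g \<in> {(\<lambda>x. h (x + a)) | h. smooth_fun h}" "b \<in> Basis"
  then obtain h where g: "g = (\<lambda>x. h (x + a))" "smooth_fun h" and b: "b \<in> Basis" by auto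
  have "dpart b g = (\<lambda>x. dpart b h (x + a))"
  proof
    fix x
    from smooth_hasderiv[OF g(2) b, of "x + a"]
    show "dpart b g x = dpart b h (x + a)" unfolding g(1) by (intro dpart_eq) (simp add: ac_simps)
  qed
  then show "dpart b g \<in> {(\<lambda>x. h (x + a)) | h. smooth_fun h}" using smooth_dpart[OF g(2) b] by auto
qed


fun WP :: "nat \<Rightarrow> real poly" where
  "WP 0 = 1"
| "WP (Suc n) = [:0,0,1:] * (WP n - pderiv (WP n))"

definition Wf :: "nat \<Rightarrow> real \<Rightarrow> real" where
  "Wf n t = (if t > 0 then poly (WP n) (1/t) * exp (-1/t) else 0)"

lemma poly_exp_lim: "((\<lambda>s. poly (Q::real poly) s * exp (-s)) \<longlongrightarrow> 0) at_top"
proof -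
  have "((\<lambda>s. \<Sum>i\<le>degree Q. coeff Q i * (s ^ i / exp s)) \<longlongrightarrow> 0) at_top"
    by (intro tendsto_null_sum tendsto_mult_right_zero tendsto_power_div_exp_0)
  moreover have "poly Q s * exp (-s) = (\<Sum>i\<le>degree Q. coeff Q i * (s ^ i / exp s))" for s
    by (simp add: poly_altdef exp_minus divide_inverse sum_distrib_right mult.assoc)
  ultimately show ?thesis by simp
qed

lemma poly_exp_lim0: "((\<lambda>h. poly (Q::real poly) (1/h) * exp (-1/h)) \<longlongrightarrow> 0) (at_right 0)"
proof -
  have "((\<lambda>h. (\<lambda>s. poly Q s * exp (-s)) (inverse h)) \<longlongrightarrow> 0) (at_right 0)"
    by (rule filterlim_compose[OF poly_exp_lim filterlim_inverse_at_top_right])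
  then show ?thesis by (simp add: o_def divide_inverse)
qed

lemma Wf_deriv: "(Wf n has_real_derivative Wf (Suc n) t) (at t)"
proof -
  consider "t > 0" | "t < 0" | "t = 0" by linarith
  then show ?thesis
  proof cases
    case 1
    let ?P = "WP n"
    have "((\<lambda>t. poly ?P (1/t) * exp (-1/t)) has_real_derivative
       poly (pderiv ?P) (1/t) * (- 1 / t^2) * exp (-1/t) + poly ?P (1/t) * (exp (-1/t) * (1/t^2))) (at t)"
      using 1
      by (auto intro!: derivative_eq_intros DERIV_chain2[OF poly_DERIV] simp: power2_eq_square field_simps)
    moreover have "poly (pderiv ?P) (1/t) * (- 1 / t^2) * exp (-1/t) + poly ?P (1/t) * (exp (-1/t) * (1/t^2))
        = Wf (Suc n) t"
      using 1 by (simp add: Wf_def field_simps power2_eq_square)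
    ultimately have "((\<lambda>t. poly ?P (1/t) * exp (-1/t)) has_real_derivative Wf (Suc n) t) (at t)" by simp
    then show ?thesis
      by (rule has_field_derivative_transform_within_open[where S="{0<..}"]) (use 1 in \<open>auto simp: Wf_def\<close>)
  next
    case 2
    have "((\<lambda>_. 0) has_real_derivative 0) (at t)" by simp
    then have "(Wf n has_real_derivative 0) (at t)"
      by (rule has_field_derivative_transform_within_open[where S="{..<0}"]) (use 2 in \<open>auto simp: Wf_def\<close>)
    then show ?thesis using 2 by (simp add: Wf_def)
  next
    case 3
    have L: "((\<lambda>y. (Wf n y - Wf n 0) / (y - 0)) \<longlongrightarrow> 0) (at_left 0)"
    proof (rule Lim_transform_eventually[OF tendsto_const])
      show "\<forall>\<^sub>F y in at_left 0. 0 = (Wf n y - Wf n 0) / (y - 0)"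
        by (auto simp: eventually_at_left_field Wf_def intro!: exI[of _ "-1"])
    qed
    have R: "((\<lambda>y. (Wf n y - Wf n 0) / (y - 0)) \<longlongrightarrow> 0) (at_right 0)"
    proof (rule Lim_transform_eventually[OF poly_exp_lim0[of "[:0,1:] * WP n"]])
      show "\<forall>\<^sub>F y in at_right 0. poly ([:0, 1:] * WP n) (1 / y) * exp (- 1 / y) = (Wf n y - Wf n 0) / (y - 0)"
        by (auto simp: eventually_at_right_field Wf_def intro!: exI[of _ 1])
    qed
    have "((\<lambda>y. (Wf n y - Wf n 0) / (y - 0)) \<longlongrightarrow> 0) (at 0)"
      unfolding at_eq_sup_left_right by (rule filterlim_sup[OF L R])
    then show ?thesis using 3 by (simp add: has_field_derivative_iff Wf_def)
  qed
qed

definition WC :: "nat \<Rightarrow> real \<Rightarrow> complex" where "WC n t = complex_of_real (Wf n t)"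

lemma WC_deriv: "(WC n has_vector_derivative WC (Suc n) t) (at t)"
  unfolding WC_def by (intro has_vector_derivative_of_real Wf_deriv)

lemma smooth_WC: "smooth_fun (WC n)"
  by (rule smooth1_seq[of WC]) (rule WC_deriv)

lemma Wf_pos: "t > 0 \<Longrightarrow> Wf 0 t > 0" by (simp add: Wf_def)
lemma Wf_nonneg: "Wf 0 t \<ge> 0" by (simp add: Wf_def)
lemma Wf_zero: "t \<le> 0 \<Longrightarrow> Wf n t = 0" by (simp add: Wf_def)



lemma tsupport_in: "f x \<noteq> 0 \<Longrightarrow> x \<in> tsupport f"
  unfolding tsupport_def using closure_subset[of "{x. f x \<noteq> 0}"] by auto

lemma tsupport_out: "x \<notin> tsupport f \<Longrightarrow> f x = 0"
  using tsupport_in by blast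

lemma closed_tsupport: "closed (tsupport f)" unfolding tsupport_def by simp

lemma dpart_out:
  assumes "x \<notin> tsupport f"
  shows "dpart b f x = 0"
proof (rule dpart_eq)
  let ?S = "{s::real. x + s *\<^sub>R b \<in> - tsupport f}"
  have "continuous_on UNIV (\<lambda>s::real. x + s *\<^sub>R b)" by (intro continuous_intros)
  from open_vimage[OF _ this, of "- tsupport f"] have o: "open ?S"
    by (simp add: closed_tsupport open_Compl vimage_def)
  have z: "0 \<in> ?S" using assms by simp
  have d: "((\<lambda>s. 0) has_derivative (\<lambda>h. h *\<^sub>R 0)) (at (0::real))" by simp
  have "((\<lambda>s. f (x + s *\<^sub>R b)) has_derivative (\<lambda>h. h *\<^sub>R 0)) (at 0)"
  proof (rule has_derivative_transform_within_open[OF d o z])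
    fix s assume "s \<in> ?S"
    then have "x + s *\<^sub>R b \<notin> tsupport f" by simp
    then show "0 = f (x + s *\<^sub>R b)" by (rule tsupport_out[symmetric])
  qed
  then show "((\<lambda>s. f (x + s *\<^sub>R b)) has_vector_derivative 0) (at 0)"
    by (simp add: has_vector_derivative_def)
qed

lemma tsupport_dpart: "tsupport (dpart b f) \<subseteq> tsupport f"
proof -
  have "{x. dpart b f x \<noteq> 0} \<subseteq> tsupport f" using dpart_out by blast
  then show ?thesis unfolding tsupport_def
    by (intro closure_minimal) (auto simp: closed_tsupport[unfolded tsupport_def])
qed

lemma tsupport_diter: "tsupport (diter bs f) \<subseteq> tsupport f"
proof (induct bs)
  case (Cons a bs)
  then show ?case using tsupport_dpart[of a "diter bs f"] by auto
qed simp

lemma compact_sub: "compact K \<Longrightarrow> tsupport g \<subseteq> K \<Longrightarrow> compact (tsupport g)"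
  using compact_Int_closed[OF _ closed_tsupport, of K g] by (simp add: Int_absorb1)

lemma test_diter: "test_fun f \<Longrightarrow> set bs \<subseteq> Basis \<Longrightarrow> test_fun (diter bs f)"
proof -
  assume f: "test_fun f" and bs: "set bs \<subseteq> Basis"
  then have "compact (tsupport (diter bs f))"
    unfolding test_fun_def using compact_sub[OF _ tsupport_diter] by blast
  moreover have "smooth_fun (diter bs f)" using f bs unfolding test_fun_def by (simp add: smooth_diter)
  ultimately show ?thesis unfolding test_fun_def by simp
qed

lemma test_dpart: "test_fun f \<Longrightarrow> b \<in> Basis \<Longrightarrow> test_fun (dpart b f)"
  using test_diter[of f "[b]"] by simp

lemma smooth_lin: "smooth_fun f \<Longrightarrow> smooth_fun g \<Longrightarrow> smooth_fun (\<lambda>x. a * f x + b * g x)"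
  by (intro smooth_add smooth_cmult)

lemma tsupport_lin: "tsupport (\<lambda>x. a * f x + b * g x) \<subseteq> tsupport f \<union> tsupport g"
proof -
  have "{x. a * f x + b * g x \<noteq> 0} \<subseteq> {x. f x \<noteq> 0} \<union> {x. g x \<noteq> 0}" by auto
  then have "closure {x. a * f x + b * g x \<noteq> 0} \<subseteq> closure ({x. f x \<noteq> 0} \<union> {x. g x \<noteq> 0})"
    by (rule closure_mono)
  then show ?thesis unfolding tsupport_def closure_Un .
qed

lemma test_lin: "test_fun f \<Longrightarrow> test_fun g \<Longrightarrow> test_fun (\<lambda>x. a * f x + b * g x)"
proof -
  assume f: "test_fun f" and g: "test_fun g"
  then have "compact (tsupport f \<union> tsupport g)" unfolding test_fun_def by (intro compact_Un) auto
  then have "compact (tsupport (\<lambda>x. a * f x + b * g x))" by (rule compact_sub[OF _ tsupport_lin])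
  then show ?thesis using f g smooth_lin unfolding test_fun_def by blast
qed

lemma dpart_lin:
  assumes "smooth_fun f" "smooth_fun g" "c \<in> Basis"
  shows "dpart c (\<lambda>x. a * f x + b * g x) = (\<lambda>x. a * dpart c f x + b * dpart c g x)"
proof
  fix x
  show "dpart c (\<lambda>x. a * f x + b * g x) x = a * dpart c f x + b * dpart c g x"
    by (rule dpart_eq, rule has_vector_derivative_add[OF has_vector_derivative_mult_right[OF smooth_hasderiv[OF assms(1,3)]]
        has_vector_derivative_mult_right[OF smooth_hasderiv[OF assms(2,3)]]])
qed

lemma diter_lin:
  assumes "smooth_fun f" "smooth_fun g" "set bs \<subseteq> Basis"
  shows "diter bs (\<lambda>x. a * f x + b * g x) = (\<lambda>x. a * diter bs f x + b * diter bs g x)"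
  using assms(3)
proof (induct bs)
  case Nil then show ?case by simp
next
  case (Cons c bs)
  have sm: "smooth_fun (diter bs f)" "smooth_fun (diter bs g)" using Cons.prems assms(1,2) by (auto intro: smooth_diter)
  have c: "c \<in> Basis" using Cons.prems by simp
  show ?case using dpart_lin[OF sm c, of a b] Cons by simp
qed

lemma bounded_cs:
  fixes h :: "'a::euclidean_space \<Rightarrow> 'b::real_normed_vector"
  assumes "continuous_on UNIV h" "compact K" "\<And>x. x \<notin> K \<Longrightarrow> h x = 0"
  shows "bounded (range h)"
proof -
  have "range h \<subseteq> h ` K \<union> {0}" using assms(3) by auto
  moreover have "bounded (h ` K)"
    using assms(1,2) by (intro compact_imp_bounded compact_continuous_image continuous_on_subset[OF assms(1)]) auto
  moreover have "bounded (h ` K \<union> {0})" using \<open>bounded (h ` K)\<close> by simp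
  ultimately show ?thesis using bounded_subset by blast
qed

lemma test_bounded: "test_fun f \<Longrightarrow> \<exists>B. \<forall>x. norm (f x) \<le> B"
proof -
  assume "test_fun f"
  then have "bounded (range f)" unfolding test_fun_def
    by (intro bounded_cs[of f "tsupport f"]) (auto intro: smooth_cont tsupport_out)
  then show ?thesis unfolding bounded_iff by auto
qed

lemma test_schwartz: assumes "test_fun f" shows "schwartz_fun f"
  unfolding schwartz_fun_def
proof (intro conjI allI impI)
  show "smooth_fun f" using assms unfolding test_fun_def by simp
  fix k :: nat and bs :: "'a list" assume bs: "set bs \<subseteq> Basis"
  have "test_fun (diter bs f)" by (rule test_diter[OF assms bs])
  then have "continuous_on UNIV (diter bs f)" "compact (tsupport (diter bs f))"
    unfolding test_fun_def by (auto intro: smooth_cont)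
  then show "bounded (range (\<lambda>x. norm x ^ k * norm (diter bs f x)))"
  proof (intro bounded_cs[where K="tsupport (diter bs f)"])
    fix x assume "x \<notin> tsupport (diter bs f)"
    then have "diter bs f x = 0" by (rule tsupport_out)
    then show "norm x ^ k * norm (diter bs f x) = 0" by simp
  qed (auto intro!: continuous_intros)
qed

lemma schwartz_lin:
  assumes f: "schwartz_fun f" and g: "schwartz_fun g"
  shows "schwartz_fun (\<lambda>x. a * f x + b * g x)"
  unfolding schwartz_fun_def
proof (intro conjI allI impI)
  have sf: "smooth_fun f" "smooth_fun g" using f g unfolding schwartz_fun_def by auto
  then show "smooth_fun (\<lambda>x. a * f x + b * g x)" by (rule smooth_lin)
  fix k :: nat and bs :: "'a list" assume bs: "set bs \<subseteq> Basis"
  have "bounded (range (\<lambda>x. norm x ^ k * norm (diter bs f x)))"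
    using f bs unfolding schwartz_fun_def by simp
  then obtain B1 where B1: "\<And>x. norm (norm x ^ k * norm (diter bs f x)) \<le> B1"
    unfolding bounded_iff by auto
  have "bounded (range (\<lambda>x. norm x ^ k * norm (diter bs g x)))"
    using g bs unfolding schwartz_fun_def by simp
  then obtain B2 where B2: "\<And>x. norm (norm x ^ k * norm (diter bs g x)) \<le> B2"
    unfolding bounded_iff by auto
  have e: "diter bs (\<lambda>x. a * f x + b * g x) = (\<lambda>x. a * diter bs f x + b * diter bs g x)"
    using sf bs by (rule diter_lin)
  have "norm (norm x ^ k * norm (a * diter bs f x + b * diter bs g x)) \<le> norm a * B1 + norm b * B2" for x
  proof -
    have "norm (norm x ^ k * norm (a * diter bs f x + b * diter bs g x))
        = norm x ^ k * norm (a * diter bs f x + b * diter bs g x)" by simp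
    also have "\<dots> \<le> norm x ^ k * (norm a * norm (diter bs f x) + norm b * norm (diter bs g x))"
      by (intro mult_left_mono) (auto intro: norm_triangle_le simp: norm_mult)
    also have "\<dots> = norm a * (norm x ^ k * norm (diter bs f x)) + norm b * (norm x ^ k * norm (diter bs g x))"
      by (simp add: algebra_simps)
    also have "\<dots> \<le> norm a * B1 + norm b * B2"
      using B1[of x] B2[of x] by (intro add_mono mult_left_mono) auto
    finally show ?thesis .
  qed
  then show "bounded (range (\<lambda>x. norm x ^ k * norm (diter bs (\<lambda>x. a * f x + b * g x) x)))"
    unfolding e bounded_iff by blast
qed

lemma Cseminorm0_ge:
  assumes "test_fun f" shows "norm (f x) \<le> Cseminorm 0 f"
proof -
  have e: "{norm (diter bs f x) | bs x. set bs \<subseteq> Basis \<and> length bs \<le> 0} = range (\<lambda>x. norm (f x))"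
    by force
  obtain B where "\<And>x. norm (f x) \<le> B" using test_bounded[OF assms] by blast
  then have "bdd_above (range (\<lambda>x. norm (f x)))" by (auto intro!: bdd_aboveI[of _ B])
  then show ?thesis unfolding Cseminorm_def e by (intro cSup_upper) auto
qed

lemma pow_bound: "(r::real) \<ge> 0 \<Longrightarrow> (1 + r) ^ N \<le> 2 ^ N * (1 + r ^ N)"
proof (cases "r \<le> 1")
  case True
  assume r: "r \<ge> 0"
  have "(1 + r) ^ N \<le> 2 ^ N" using True r by (intro power_mono) auto
  also have "\<dots> \<le> 2 ^ N * (1 + r ^ N)" using r by simp
  finally show ?thesis .
next
  case False
  assume r: "r \<ge> 0"
  have "(1 + r) ^ N \<le> (2 * r) ^ N" using False r by (intro power_mono) auto
  also have "\<dots> \<le> 2 ^ N * (1 + r ^ N)" using r by (simp add: power_mult_distrib)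
  finally show ?thesis .
qed

lemma Sseminorm_ge:
  fixes f :: "'a::euclidean_space \<Rightarrow> complex"
  assumes "schwartz_fun f" shows "(1 + norm x) ^ N * norm (f x) \<le> Sseminorm N f"
proof -
  let ?A = "{bs. set bs \<subseteq> (Basis::'a set) \<and> length bs \<le> N}"
  let ?g = "\<lambda>bs x. (1 + norm x) ^ N * norm (diter bs f x)"
  have e: "{(1 + norm x) ^ N * norm (diter bs f x) | bs x. set bs \<subseteq> Basis \<and> length bs \<le> N}
      = (\<Union>bs\<in>?A. range (?g bs))" by blast
  have "bdd_above (range (?g bs))" if "bs \<in> ?A" for bs
  proof -
    have sb: "set bs \<subseteq> Basis" using that by simp
    have all: "\<forall>k bs. set bs \<subseteq> Basis \<longrightarrow> bounded (range (\<lambda>x. norm x ^ k * norm (diter bs f x)))"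
      using assms unfolding schwartz_fun_def by simp
    have "bounded (range (\<lambda>x. norm x ^ 0 * norm (diter bs f x)))"
      using all sb by blast
    then obtain B0 where B0: "\<And>x. norm (norm x ^ 0 * norm (diter bs f x)) \<le> B0"
      unfolding bounded_iff by auto
    have "bounded (range (\<lambda>x. norm x ^ N * norm (diter bs f x)))"
      using all sb by blast
    then obtain BN where BN: "\<And>x. norm (norm x ^ N * norm (diter bs f x)) \<le> BN"
      unfolding bounded_iff by auto
    have "?g bs x \<le> 2 ^ N * (B0 + BN)" for x
    proof -
      have "?g bs x \<le> 2 ^ N * (1 + norm x ^ N) * norm (diter bs f x)"
        by (intro mult_right_mono pow_bound) auto
      also have "\<dots> = 2 ^ N * (norm (diter bs f x) + norm x ^ N * norm (diter bs f x))"
        by (simp add: algebra_simps)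
      also have "\<dots> \<le> 2 ^ N * (B0 + BN)"
        using B0[of x] BN[of x] by (intro mult_left_mono add_mono) auto
      finally show ?thesis .
    qed
    then show ?thesis by (auto intro!: bdd_aboveI[of _ "2 ^ N * (B0 + BN)"])
  qed
  then have "bdd_above (\<Union>bs\<in>?A. range (?g bs))"
    by (subst bdd_above_UN) (auto intro: finite_lists_length_le)
  moreover have "(1 + norm x) ^ N * norm (f x) \<in> (\<Union>bs\<in>?A. range (?g bs))"
  proof (rule UN_I)
    show "[] \<in> ?A" by simp
    show "(1 + norm x) ^ N * norm (f x) \<in> range (?g [])" by (rule range_eqI[of _ _ x]) simp
  qed
  ultimately show ?thesis unfolding Sseminorm_def e by (rule cSup_upper[rotated])
qed



lemma int_cs:
  fixes F :: "'a::euclidean_space \<Rightarrow> complex"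
  assumes "continuous_on UNIV F" "compact K" "\<And>x. x \<notin> K \<Longrightarrow> F x = 0"
  shows "integrable lborel F"
proof -
  have "integrable lborel (\<lambda>x. indicator K x *\<^sub>R F x)"
    by (rule borel_integrable_compact[OF assms(2) continuous_on_subset[OF assms(1)]]) auto
  moreover have "(\<lambda>x. indicator K x *\<^sub>R F x) = F"
    using assms(3) by (auto simp: indicator_def)
  ultimately show ?thesis by simp
qed

lemma int_translate:
  fixes F :: "'a::euclidean_space \<Rightarrow> complex"
  assumes "F \<in> borel_measurable borel"
  shows "(\<integral>x. F (c + x) \<partial>lborel) = (\<integral>x. F x \<partial>lborel)"
proof -
  have "(\<integral>x. F x \<partial>lborel) = (\<integral>x. F x \<partial>(distr lborel borel ((+) c)))"
    by (simp add: lborel_distr_plus)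
  also have "\<dots> = (\<integral>x. F (c + x) \<partial>lborel)"
    by (rule integral_distr) (auto simp: assms)
  finally show ?thesis by simp
qed

lemma zero_int:
  fixes F F' :: "'a::euclidean_space \<Rightarrow> complex"
  assumes cF: "continuous_on UNIV F" and cF': "continuous_on UNIV F'" and K: "compact K"
    and out: "\<And>z. z \<notin> K \<Longrightarrow> F z = 0" "\<And>z. z \<notin> K \<Longrightarrow> F' z = 0"
    and der: "\<And>z. ((\<lambda>s. F (z + s *\<^sub>R b)) has_vector_derivative F' z) (at 0)"
  shows "(\<integral>z. F' z \<partial>lborel) = 0"
proof -
  have derr: "((\<lambda>s. F (z + s *\<^sub>R b)) has_vector_derivative F' (z + r *\<^sub>R b)) (at r)" for z r
  proof -
    have "((\<lambda>s. F ((z + r *\<^sub>R b) + s *\<^sub>R b)) has_vector_derivative F' (z + r *\<^sub>R b)) (at (-r + 1 * r))"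
      using der[of "z + r *\<^sub>R b"] by simp
    from vd_affine[OF this] show ?thesis by (simp add: algebra_simps)
  qed
  obtain M where M: "\<And>z. norm (F' z) \<le> M"
    using bounded_cs[OF cF' K out(2)] unfolding bounded_iff by auto
  have M0: "M \<ge> 0" using M[of 0] norm_ge_zero[of "F' 0"] by linarith
  have lip: "norm (F (z + s *\<^sub>R b) - F z) \<le> 3 * M * \<bar>s\<bar>" for z s
  proof -
    have "norm ((\<lambda>s. F (z + s *\<^sub>R b)) s - (\<lambda>s. F (z + s *\<^sub>R b)) 0 - (s - 0) *\<^sub>R F' (z + 0 *\<^sub>R b))
        \<le> norm (s - 0) * (2 * M)"
    proof (rule vector_differentiable_bound_linearization[where S=UNIV])
      show "((\<lambda>s. F (z + s *\<^sub>R b)) has_vector_derivative F' (z + x *\<^sub>R b)) (at x within UNIV)" for x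
        by (rule derr)
      show "norm (F' (z + x *\<^sub>R b) - F' (z + 0 *\<^sub>R b)) \<le> 2 * M" for x
        using M[of "z + x *\<^sub>R b"] M[of "z + 0 *\<^sub>R b"] norm_triangle_ineq4[of "F' (z + x *\<^sub>R b)" "F' (z + 0 *\<^sub>R b)"]
        by linarith
    qed simp_all
    then have "norm (F (z + s *\<^sub>R b) - F z - s *\<^sub>R F' z) \<le> \<bar>s\<bar> * (2 * M)" by simp
    moreover have "norm (s *\<^sub>R F' z) \<le> \<bar>s\<bar> * M" using M[of z] by (simp add: mult_left_mono)
    ultimately show ?thesis
      using norm_triangle_ineq[of "F (z + s *\<^sub>R b) - F z - s *\<^sub>R F' z" "s *\<^sub>R F' z"]
      by (simp add: algebra_simps)
  qed
  obtain R where R: "\<And>z. z \<in> K \<Longrightarrow> norm z \<le> R"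
    using compact_imp_bounded[OF K] unfolding bounded_pos by auto
  define K' where "K' = cball (0::'a) (R + norm b)"
  define s where "s n = inverse (real (Suc n))" for n
  have s_pos: "s n > 0" "s n \<le> 1" for n by (auto simp: s_def field_simps)
  define Q where "Q n z = (1 / s n) *\<^sub>R (F (z + s n *\<^sub>R b) - F z)" for n z
  have mF: "F \<in> borel_measurable borel" by (rule borel_measurable_continuous_onI[OF cF])
  have iF: "integrable lborel F" by (rule int_cs[OF cF K out(1)])
  have iFt: "integrable lborel (\<lambda>z. F (z + c))" for c
  proof (rule int_cs)
    show "continuous_on UNIV (\<lambda>z. F (z + c))"
      by (rule continuous_on_compose2[OF cF]) (auto intro!: continuous_intros)
    show "compact ((+) (-c) ` K)" by (rule compact_translation[OF K])
    fix z assume "z \<notin> (+) (-c) ` K"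
    then have "z + c \<notin> K" by (rule contrapos_nn) (rule image_eqI[of _ _ "z + c"], simp_all)
    then show "F (z + c) = 0" by (rule out(1))
  qed
  have intQ: "integral\<^sup>L lborel (Q n) = 0" for n
  proof -
    have "integral\<^sup>L lborel (Q n) = (1 / s n) *\<^sub>R ((\<integral>z. F (z + s n *\<^sub>R b) \<partial>lborel) - (\<integral>z. F z \<partial>lborel))"
      unfolding Q_def by (simp add: Bochner_Integration.integral_diff[OF iFt iF])
    also have "(\<integral>z. F (z + s n *\<^sub>R b) \<partial>lborel) = (\<integral>z. F z \<partial>lborel)"
      using int_translate[OF mF, of "s n *\<^sub>R b"] by (simp add: add.commute)
    finally show ?thesis by simp
  qed
  have lim: "(\<lambda>n. integral\<^sup>L lborel (Q n)) \<longlonglongrightarrow> integral\<^sup>L lborel F'"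
  proof (rule integral_dominated_convergence[where w="\<lambda>z. 3 * M * indicator K' z"])
    show "F' \<in> borel_measurable lborel" using borel_measurable_continuous_onI[OF cF'] by simp
    show "Q n \<in> borel_measurable lborel" for n
    proof -
      have c1: "continuous_on UNIV (\<lambda>z. F (z + s n *\<^sub>R b))"
        by (rule continuous_on_compose2[OF cF]) (auto intro!: continuous_intros)
      have "continuous_on UNIV (Q n)" unfolding Q_def
        by (intro continuous_on_scaleR continuous_on_diff c1 cF continuous_on_const)
      then show ?thesis using borel_measurable_continuous_onI by simp
    qed
    show "integrable lborel (\<lambda>z. 3 * M * indicator K' z)"
      unfolding K'_def by (intro integrable_mult_right integrable_real_indicator emeasure_bounded_finite) auto
    show "AE z in lborel. (\<lambda>n. Q n z) \<longlonglongrightarrow> F' z"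
    proof (intro AE_I2)
      fix z
      have "((\<lambda>s. F (z + s *\<^sub>R b)) has_derivative (\<lambda>h. h *\<^sub>R F' z)) (at 0)"
        using der[of z] by (simp add: has_vector_derivative_def)
      then have d: "((\<lambda>h. norm (F (z + h *\<^sub>R b) - F z - h *\<^sub>R F' z) / norm h) \<longlongrightarrow> 0) (at 0)"
        unfolding has_derivative_at by simp
      have sl: "filterlim s (at 0) sequentially"
        unfolding filterlim_at s_def using LIMSEQ_inverse_real_of_nat by auto
      have "(\<lambda>n. norm (F (z + s n *\<^sub>R b) - F z - s n *\<^sub>R F' z) / norm (s n)) \<longlonglongrightarrow> 0"
        by (rule filterlim_compose[OF d sl])
      moreover have "norm (F (z + s n *\<^sub>R b) - F z - s n *\<^sub>R F' z) / norm (s n) = norm (Q n z - F' z)" for n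
      proof -
        have "Q n z - F' z = (1 / s n) *\<^sub>R (F (z + s n *\<^sub>R b) - F z - s n *\<^sub>R F' z)"
          using s_pos[of n] unfolding Q_def by (simp add: algebra_simps)
        then show ?thesis using s_pos[of n] by (simp add: divide_simps)
      qed
      ultimately have "(\<lambda>n. norm (Q n z - F' z)) \<longlonglongrightarrow> 0" by simp
      then have "(\<lambda>n. Q n z - F' z) \<longlonglongrightarrow> 0" by (simp add: tendsto_norm_zero_iff)
      from tendsto_add[OF this tendsto_const[of "F' z"]] show "(\<lambda>n. Q n z) \<longlonglongrightarrow> F' z" by simp
    qed
    show "AE z in lborel. norm (Q n z) \<le> 3 * M * indicator K' z" for n
    proof (intro AE_I2)
      fix z
      show "norm (Q n z) \<le> 3 * M * indicator K' z"
      proof (cases "z \<in> K'")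
        case True
        have "norm (Q n z) = norm (F (z + s n *\<^sub>R b) - F z) / s n"
          using s_pos[of n] by (simp add: Q_def)
        also have "\<dots> \<le> 3 * M * \<bar>s n\<bar> / s n"
          using lip[of z "s n"] s_pos[of n] by (intro divide_right_mono) auto
        also have "\<dots> = 3 * M" using s_pos[of n] by simp
        finally show ?thesis using True by simp
      next
        case False
        then have nz: "norm z > R + norm b" unfolding K'_def by simp
        have "z \<notin> K"
        proof
          assume "z \<in> K" then have "norm z \<le> R" by (rule R)
          then show False using nz norm_ge_zero[of b] by linarith
        qed
        moreover have "z + s n *\<^sub>R b \<notin> K"
        proof
          assume "z + s n *\<^sub>R b \<in> K"
          then have "norm (z + s n *\<^sub>R b) \<le> R" by (rule R)
          moreover have "norm (s n *\<^sub>R b) \<le> norm b" using s_pos[of n]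
            by (simp add: mult_left_le_one_le)
          ultimately show False using nz norm_triangle_ineq2[of z "- (s n *\<^sub>R b)"] by simp
        qed
        ultimately show ?thesis using out(1) False by (simp add: Q_def)
      qed
    qed
  qed
  moreover have "(\<lambda>n. integral\<^sup>L lborel (Q n)) \<longlonglongrightarrow> 0" using intQ by simp
  ultimately show ?thesis using LIMSEQ_unique by metis
qed



lemma ibp:
  fixes P Pb :: "'a::euclidean_space \<Rightarrow> complex"
  assumes chi: "test_fun \<phi>" and b: "b \<in> Basis" and cP: "continuous_on UNIV P"
    and cPb: "continuous_on UNIV Pb"
    and dP: "\<And>z. ((\<lambda>s. P (z + s *\<^sub>R b)) has_vector_derivative Pb z) (at 0)"
  shows "(\<integral>z. P z * dpart b \<phi> z \<partial>lborel) = - (\<integral>z. Pb z * \<phi> z \<partial>lborel)"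
proof -
  have s: "smooth_fun \<phi>" and K: "compact (tsupport \<phi>)" using chi unfolding test_fun_def by auto
  have c1: "continuous_on UNIV \<phi>" by (rule smooth_cont[OF s])
  have c2: "continuous_on UNIV (dpart b \<phi>)" by (rule smooth_cont[OF smooth_dpart[OF s b]])
  have o1: "\<phi> z = 0" if "z \<notin> tsupport \<phi>" for z using that by (rule tsupport_out)
  have o2: "dpart b \<phi> z = 0" if "z \<notin> tsupport \<phi>" for z using that by (rule dpart_out)
  have i1: "integrable lborel (\<lambda>z. Pb z * \<phi> z)"
    by (rule int_cs[OF _ K]) (auto intro!: continuous_intros cPb c1 simp: o1)
  have i2: "integrable lborel (\<lambda>z. P z * dpart b \<phi> z)"
    by (rule int_cs[OF _ K]) (auto intro!: continuous_intros cP c2 simp: o2)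
  have "(\<integral>z. (Pb z * \<phi> z + P z * dpart b \<phi> z) \<partial>lborel) = 0"
  proof (rule zero_int[OF _ _ K])
    show "continuous_on UNIV (\<lambda>z. P z * \<phi> z)" by (intro continuous_intros cP c1)
    show "continuous_on UNIV (\<lambda>z. Pb z * \<phi> z + P z * dpart b \<phi> z)"
      by (intro continuous_intros cP cPb c1 c2)
    show "P z * \<phi> z = 0" if "z \<notin> tsupport \<phi>" for z using o1[OF that] by simp
    show "Pb z * \<phi> z + P z * dpart b \<phi> z = 0" if "z \<notin> tsupport \<phi>" for z
      using o1[OF that] o2[OF that] by simp
    show "((\<lambda>s. P (z + s *\<^sub>R b) * \<phi> (z + s *\<^sub>R b)) has_vector_derivative
        Pb z * \<phi> z + P z * dpart b \<phi> z) (at 0)" for z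
      using has_vector_derivative_mult[OF dP smooth_hasderiv[OF s b], of z z]
      by (simp add: algebra_simps)
  qed
  then have "(\<integral>z. Pb z * \<phi> z \<partial>lborel) + (\<integral>z. P z * dpart b \<phi> z \<partial>lborel) = 0"
    by (simp add: Bochner_Integration.integral_add[OF i1 i2])
  then show ?thesis by (simp add: eq_neg_iff_add_eq_0 add.commute)
qed

definition Phi :: "real^'d \<Rightarrow> nat \<Rightarrow> (real^'d) \<times> real \<Rightarrow> complex" where
  "Phi y j z = exp (\<i> * of_real (y \<bullet> fst z)) * WC j (snd z)"

lemma cont_WC: "continuous_on UNIV (WC j)" by (rule smooth_cont[OF smooth_WC])

lemma cont_Phi: "continuous_on UNIV (Phi y j)"
  unfolding Phi_def
  by (intro continuous_intros continuous_on_compose2[OF cont_WC]) auto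

lemma Phi_dx:
  "((\<lambda>s. Phi y j (z + s *\<^sub>R (u, 0))) has_vector_derivative (\<i> * of_real (y \<bullet> u)) * Phi y j z) (at 0)"
proof -
  have e: "(\<lambda>s. Phi y j (z + s *\<^sub>R (u, 0))) = (\<lambda>s. exp (\<i> * of_real (y \<bullet> fst z) + of_real s * (\<i> * of_real (y \<bullet> u))) * WC j (snd z))"
    by (auto simp: Phi_def inner_add_right algebra_simps)
  have "((\<lambda>s. exp (\<i> * of_real (y \<bullet> fst z) + of_real s * (\<i> * of_real (y \<bullet> u))) * WC j (snd z))
     has_vector_derivative (exp (\<i> * of_real (y \<bullet> fst z) + of_real 0 * (\<i> * of_real (y \<bullet> u))) * (\<i> * of_real (y \<bullet> u))) * WC j (snd z)) (at 0)"
    by (intro has_vector_derivative_mult_left has_vector_derivative_real_field)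
       (auto intro!: derivative_eq_intros)
  then show ?thesis unfolding e by (simp add: Phi_def algebra_simps)
qed

lemma Phi_dt:
  "((\<lambda>s. Phi y j (z + s *\<^sub>R (0, 1))) has_vector_derivative Phi y (Suc j) z) (at 0)"
proof -
  have e: "(\<lambda>s. Phi y j (z + s *\<^sub>R (0, 1))) = (\<lambda>s. exp (\<i> * of_real (y \<bullet> fst z)) * WC j (snd z + 1 * s))"
    by (auto simp: Phi_def)
  have "((\<lambda>s. WC j (snd z + 1 * s)) has_vector_derivative 1 *\<^sub>R WC (Suc j) (snd z)) (at 0)"
    by (rule vd_affine) (simp add: WC_deriv)
  from has_vector_derivative_mult_right[OF this, of "exp (\<i> * of_real (y \<bullet> fst z))"]
  show ?thesis unfolding e by (simp add: Phi_def)
qed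

definition Uw :: "real^'d \<Rightarrow> nat \<Rightarrow> ((real^'d) \<times> real \<Rightarrow> complex) \<Rightarrow> complex" where
  "Uw y j \<phi> = (if test_fun \<phi> then \<integral>z. Phi y j z * \<phi> z \<partial>lborel else 0)"

lemma ex_Basis: "ex k \<in> Basis"
  by (auto simp: ex_def Basis_prod_def axis_in_Basis_iff)

lemma et_Basis: "et \<in> Basis"
  by (auto simp: et_def Basis_prod_def)

lemma U_dx:
  assumes "test_fun \<phi>"
  shows "Uw y j (dpart (ex k) \<phi>) = - (\<i> * of_real (y $ k)) * Uw y j \<phi>"
proof -
  have "(\<integral>z. Phi y j z * dpart (ex k) \<phi> z \<partial>lborel) = - (\<integral>z. ((\<i> * of_real (y $ k)) * Phi y j z) * \<phi> z \<partial>lborel)"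
  proof (rule ibp[OF assms ex_Basis cont_Phi])
    show "continuous_on UNIV (\<lambda>z. \<i> * of_real (y $ k) * Phi y j z)" by (intro continuous_intros cont_Phi)
    show "((\<lambda>s. Phi y j (z + s *\<^sub>R ex k)) has_vector_derivative \<i> * of_real (y $ k) * Phi y j z) (at 0)" for z
      using Phi_dx[of y j z "axis k 1"] by (simp add: ex_def inner_axis)
  qed
  then show ?thesis using assms test_dpart[OF assms ex_Basis]
    by (simp add: Uw_def mult.assoc)
qed

lemma U_dt:
  assumes "test_fun \<phi>"
  shows "Uw y j (dpart et \<phi>) = - Uw y (Suc j) \<phi>"
proof -
  have "(\<integral>z. Phi y j z * dpart et \<phi> z \<partial>lborel) = - (\<integral>z. Phi y (Suc j) z * \<phi> z \<partial>lborel)"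
  proof (rule ibp[OF assms et_Basis cont_Phi cont_Phi])
    show "((\<lambda>s. Phi y j (z + s *\<^sub>R et)) has_vector_derivative Phi y (Suc j) z) (at 0)" for z
      using Phi_dt[of y j z] by (simp add: et_def)
  qed
  then show ?thesis using assms test_dpart[OF assms et_Basis]
    by (simp add: Uw_def)
qed

lemma ex_inj: "ex k = ex k' \<longleftrightarrow> k = k'"
  by (auto simp: ex_def axis_eq_axis)

lemma ex_et: "ex k \<noteq> et"
  by (auto simp: ex_def et_def axis_eq_0_iff)

lemma et_ex: "et \<noteq> ex k"
  using ex_et by metis

lemma U_diter:
  assumes chi: "test_fun \<phi>" and bs: "set bs \<subseteq> insert et (range ex)"
  shows "Uw y j (diter bs \<phi>) = (-1) ^ length bs *
     (\<Prod>k\<in>UNIV. (\<i> * of_real (y $ k)) ^ count_list bs (ex k)) * Uw y (j + count_list bs et) \<phi>"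
  using bs
proof (induct bs arbitrary: j)
  case Nil
  then show ?case by simp
next
  case (Cons c bs)
  have "set bs \<subseteq> insert et (range ex)" using Cons.prems by simp
  moreover have "insert et (range ex) \<subseteq> Basis" using ex_Basis et_Basis by blast
  ultimately have bsB: "set bs \<subseteq> Basis" by (rule order_trans)
  have t: "test_fun (diter bs \<phi>)" by (rule test_diter[OF chi bsB])
  from Cons.prems consider "c = et" | k where "c = ex k" by auto
  then show ?case
  proof cases
    case 1
    then have "Uw y j (diter (c # bs) \<phi>) = - Uw y (Suc j) (diter bs \<phi>)"
      using U_dt[OF t] by simp
    also have "\<dots> = - ((-1) ^ length bs *
     (\<Prod>k\<in>UNIV. (\<i> * of_real (y $ k)) ^ count_list bs (ex k)) * Uw y (Suc j + count_list bs et) \<phi>)"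
      using Cons by simp
    finally show ?thesis using 1 by (simp add: ex_et et_ex)
  next
    case 2
    let ?Pb = "\<Prod>k\<in>UNIV. (\<i> * of_real (y $ k)) ^ count_list bs (ex k)"
    let ?Pc = "\<Prod>k'\<in>UNIV. (\<i> * of_real (y $ k')) ^ count_list (c # bs) (ex k')"
    have "Uw y j (diter (c # bs) \<phi>) = - (\<i> * of_real (y $ k)) * Uw y j (diter bs \<phi>)"
      using U_dx[OF t] 2 by simp
    also have "\<dots> = - (\<i> * of_real (y $ k)) * ((-1) ^ length bs * ?Pb * Uw y (j + count_list bs et) \<phi>)"
      using Cons by simp
    finally have A: "Uw y j (diter (c # bs) \<phi>) = - (\<i> * of_real (y $ k)) * ((-1) ^ length bs * ?Pb * Uw y (j + count_list bs et) \<phi>)" .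
    have P: "?Pb * (\<i> * of_real (y $ k)) = ?Pc"
    proof -
      have "?Pc = (\<Prod>k'\<in>UNIV. (\<i> * of_real (y $ k')) ^ count_list bs (ex k') * (if k' = k then \<i> * of_real (y $ k') else 1))"
        using 2 by (intro prod.cong) (auto simp: ex_inj)
      also have "\<dots> = ?Pb * (\<i> * of_real (y $ k))"
        by (simp add: prod.distrib)
      finally show ?thesis by simp
    qed
    have "(-1) ^ length (c # bs) * ?Pc * Uw y (j + count_list (c # bs) et) \<phi>
        = - (\<i> * of_real (y $ k)) * ((-1) ^ length bs * ?Pb * Uw y (j + count_list bs et) \<phi>)"
      unfolding P[symmetric] using 2 by (simp add: ex_et algebra_simps)
    then show ?thesis using A by simp
  qed
qed



lemma count_list_replicate: "count_list (replicate n x) y = (if x = y then n else 0)"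
  by (induct n) auto

lemma exists_list_S:
  fixes f :: "'d::finite \<Rightarrow> nat"
  assumes "finite S"
  shows "\<exists>bs. set bs \<subseteq> ex ` S \<and> (\<forall>i. count_list bs (ex i) = (if i \<in> S then f i else 0))"
  using assms
proof (induct S rule: finite_induct)
  case empty
  then show ?case by (intro exI[of _ "[]"]) simp
next
  case (insert i S)
  then obtain bs where bs: "set bs \<subseteq> ex ` S" "\<forall>i. count_list bs (ex i) = (if i \<in> S then f i else 0)"
    by blast
  show ?case
  proof (intro exI[of _ "replicate (f i) (ex i) @ bs"] conjI allI)
    show "set (replicate (f i) (ex i) @ bs) \<subseteq> ex ` insert i S" using bs(1) by auto
    fix i'
    show "count_list (replicate (f i) (ex i) @ bs) (ex i') = (if i' \<in> insert i S then f i' else 0)"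
      using bs(2) insert(2) by (auto simp: count_list_append count_list_replicate ex_inj)
  qed
qed

lemma exists_list:
  fixes f :: "'d::finite \<Rightarrow> nat"
  shows "\<exists>bs. set bs \<subseteq> insert et (range ex) \<and> (\<forall>i. count_list bs (ex i) = f i) \<and> count_list bs et = j"
proof -
  obtain bs where bs: "set bs \<subseteq> ex ` UNIV" "\<forall>i. count_list bs (ex i) = (if i \<in> UNIV then f i else 0)"
    using exists_list_S[of "UNIV :: 'd set" f] by auto
  have "count_list bs et = 0"
    using bs(1) by (induct bs) (auto simp: et_ex)
  then show ?thesis using bs
    by (intro exI[of _ "replicate j et @ bs"]) (auto simp: count_list_append count_list_replicate et_ex ex_et)
qed

lemma dlist_prop:
  "set (dlist m j) \<subseteq> insert et (range ex) \<and> (\<forall>i. count_list (dlist m j) (ex i) = Poly_Mapping.lookup m i)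
    \<and> count_list (dlist m j) et = j"
  unfolding dlist_def by (rule someI_ex[OF exists_list])

lemma Dop_U:
  fixes p :: "('d::finite) mpoly poly" and y :: "real^'d"
  assumes Z: "\<And>j. j \<le> degree p \<Longrightarrow> mpeval (coeff p j) (\<chi> k. \<i> * of_real (y $ k)) = 0"
  shows "Dop p (Uw y 0) = (\<lambda>_. 0)"
proof
  fix \<phi> :: "(real^'d) \<times> real \<Rightarrow> complex"
  show "Dop p (Uw y 0) \<phi> = 0"
  proof (cases "test_fun \<phi>")
    case False
    then show ?thesis by (simp add: Dop_def)
  next
    case True
    have trm: "Poly_Mapping.lookup (coeff p j) m * (-1) ^ length (dlist m j) * Uw y 0 (diter (dlist m j) \<phi>)
      = (Poly_Mapping.lookup (coeff p j) m * (\<Prod>i\<in>UNIV. ((\<chi> k. \<i> * of_real (y $ k)) $ i) ^ Poly_Mapping.lookup m i)) * Uw y j \<phi>"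
      for j m
    proof -
      have dp: "set (dlist m j) \<subseteq> insert et (range ex)" "\<And>i. count_list (dlist m j) (ex i) = Poly_Mapping.lookup m i"
        "count_list (dlist m j) et = j" using dlist_prop by blast+
      have "Uw y 0 (diter (dlist m j) \<phi>) = (-1) ^ length (dlist m j) *
          (\<Prod>k\<in>UNIV. (\<i> * of_real (y $ k)) ^ Poly_Mapping.lookup m k) * Uw y j \<phi>"
        using U_diter[OF True dp(1), of y 0] dp(2,3) by simp
      moreover have "((-1::complex) ^ length (dlist m j)) * (-1) ^ length (dlist m j) = 1"
        by (simp add: power_add[symmetric])
      ultimately show ?thesis
        by (simp add: algebra_simps)
    qed
    have "Dop p (Uw y 0) \<phi> = (\<Sum>j\<le>degree p. mpeval (coeff p j) (\<chi> k. \<i> * of_real (y $ k)) * Uw y j \<phi>)"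
      unfolding Dop_def mpeval_def using True
      by (simp add: trm sum_distrib_right)
    also have "\<dots> = 0" using Z by simp
    finally show ?thesis .
  qed
qed



lemma test_int:
  fixes P :: "'a::euclidean_space \<Rightarrow> complex"
  assumes "continuous_on UNIV P" "test_fun \<phi>"
  shows "integrable lborel (\<lambda>z. P z * \<phi> z)"
proof (rule int_cs[where K="tsupport \<phi>"])
  have "continuous_on UNIV \<phi>" using assms(2) unfolding test_fun_def by (auto intro: smooth_cont)
  then show "continuous_on UNIV (\<lambda>z. P z * \<phi> z)"
    by (intro continuous_on_mult assms(1))
  show "compact (tsupport \<phi>)" using assms(2) by (simp add: test_fun_def)
  fix z assume "z \<notin> tsupport \<phi>"
  then have "\<phi> z = 0" by (rule tsupport_out)
  then show "P z * \<phi> z = 0" by simp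
qed

lemma dist_weight:
  fixes P :: "'a::euclidean_space \<Rightarrow> complex"
  assumes cP: "continuous_on UNIV P"
  shows "distribution (\<lambda>\<phi>. if test_fun \<phi> then \<integral>z. P z * \<phi> z \<partial>lborel else 0)"
  unfolding distribution_def
proof (intro conjI allI impI)
  fix \<phi> :: "'a \<Rightarrow> complex" assume "\<not> test_fun \<phi>"
  then show "(if test_fun \<phi> then \<integral>z. P z * \<phi> z \<partial>lborel else 0) = 0" by simp
next
  fix \<phi> g :: "'a \<Rightarrow> complex" and a b :: complex
  assume f: "test_fun \<phi>" and g: "test_fun g"
  have i1: "integrable lborel (\<lambda>z. P z * \<phi> z)" by (rule test_int[OF cP f])
  have i2: "integrable lborel (\<lambda>z. P z * g z)" by (rule test_int[OF cP g])
  have "(\<integral>z. P z * (a * \<phi> z + b * g z) \<partial>lborel) = (\<integral>z. a * (P z * \<phi> z) + b * (P z * g z) \<partial>lborel)"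
    by (simp add: algebra_simps)
  also have "\<dots> = a * (\<integral>z. P z * \<phi> z \<partial>lborel) + b * (\<integral>z. P z * g z \<partial>lborel)"
    using i1 i2 by (simp add: Bochner_Integration.integral_add)
  finally show "(if test_fun (\<lambda>x. a * \<phi> x + b * g x) then \<integral>z. P z * (a * \<phi> z + b * g z) \<partial>lborel else 0) =
       a * (if test_fun \<phi> then \<integral>z. P z * \<phi> z \<partial>lborel else 0) + b * (if test_fun g then \<integral>z. P z * g z \<partial>lborel else 0)"
    using test_lin[OF f g] f g by simp
next
  fix K :: "'a set" assume K: "compact K"
  define C where "C = (\<integral>z. indicator K z * norm (P z) \<partial>lborel)"
  have iC: "integrable lborel (\<lambda>z. indicator K z * norm (P z))"
    using borel_integrable_compact[OF K, of "\<lambda>z. norm (P z)"] continuous_on_subset[OF cP]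
    by (auto intro!: continuous_intros)
  show "\<exists>C N. \<forall>\<phi>. test_fun \<phi> \<and> tsupport \<phi> \<subseteq> K \<longrightarrow>
     norm (if test_fun \<phi> then \<integral>z. P z * \<phi> z \<partial>lborel else 0) \<le> C * Cseminorm N \<phi>"
  proof (intro exI[of _ C] exI[of _ 0] allI impI)
    fix \<phi> :: "'a \<Rightarrow> complex" assume "test_fun \<phi> \<and> tsupport \<phi> \<subseteq> K"
    then have f: "test_fun \<phi>" and sK: "tsupport \<phi> \<subseteq> K" by auto
    have "norm (\<integral>z. P z * \<phi> z \<partial>lborel) \<le> (\<integral>z. norm (P z * \<phi> z) \<partial>lborel)"
      by (rule integral_norm_bound)
    also have "\<dots> \<le> (\<integral>z. indicator K z * norm (P z) * Cseminorm 0 \<phi> \<partial>lborel)"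
    proof (rule Bochner_Integration.integral_mono)
      show "integrable lborel (\<lambda>z. norm (P z * \<phi> z))" using test_int[OF cP f] by simp
      show "integrable lborel (\<lambda>z. indicator K z * norm (P z) * Cseminorm 0 \<phi>)"
        using iC by simp
      fix z
      show "norm (P z * \<phi> z) \<le> indicator K z * norm (P z) * Cseminorm 0 \<phi>"
      proof (cases "z \<in> K")
        case True
        then show ?thesis using Cseminorm0_ge[OF f, of z]
          by (simp add: norm_mult mult_left_mono)
      next
        case False
        then have "z \<notin> tsupport \<phi>" using sK by auto
        then have "\<phi> z = 0" by (rule tsupport_out)
        then show ?thesis using False by simp
      qed
    qed
    also have "\<dots> = C * Cseminorm 0 \<phi>" unfolding C_def by simp
    finally show "norm (if test_fun \<phi> then \<integral>z. P z * \<phi> z \<partial>lborel else 0) \<le> C * Cseminorm 0 \<phi>"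
      using f by simp
  qed
qed

lemma int_pos:
  fixes g :: "'a::euclidean_space \<Rightarrow> real"
  assumes cg: "continuous_on UNIV g" and ig: "integrable lborel g" and nn: "\<And>z. g z \<ge> 0"
    and z0: "g z0 > 0"
  shows "(\<integral>z. g z \<partial>lborel) > 0"
proof -
  have ge: "(\<integral>z. g z \<partial>lborel) \<ge> 0" using nn by simp
  have "open {z. g z > 0}"
    using open_Collect_less[OF continuous_on_const cg] by simp
  then obtain e where e: "e > 0" "ball z0 e \<subseteq> {z. g z > 0}"
    using z0 open_contains_ball by blast
  show ?thesis
  proof (rule ccontr)
    assume "\<not> ?thesis"
    then have "(\<integral>z. g z \<partial>lborel) = 0" using ge by simp
    then have "AE z in lborel. g z = 0"
      using integral_nonneg_eq_0_iff_AE[OF ig] nn by simp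
    then have "AE z in lborel. z \<notin> ball z0 e"
      by eventually_elim (use e in auto)
    then have "emeasure lborel (ball z0 e) = 0"
      by (subst (asm) AE_iff_measurable[of "ball z0 e"]) auto
    moreover have "emeasure lborel (ball z0 e) > 0"
      using e by (simp add: emeasure_ball)
    ultimately show False by simp
  qed
qed

definition gS :: "'a::euclidean_space \<Rightarrow> real" where
  "gS x = (\<Prod>b\<in>Basis. inverse (1 + (x \<bullet> b)^2))"

lemma int_h: "integrable lborel (\<lambda>r::real. inverse (1 + r^2))"
  using integrable_inverse_1_plus_square by (simp add: set_integrable_def einterval_eq_UNIV)

lemma int_gS: "integrable lborel (gS :: 'a::euclidean_space \<Rightarrow> real)"
proof -
  have m: "gS \<in> borel_measurable lborel" unfolding gS_def by measurable
  have fe: "(\<lambda>x::'a. ennreal (norm (gS x))) = (\<lambda>x. (\<Prod>b\<in>(Basis::'a set). ennreal (inverse (1 + (x \<bullet> b)^2))))"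
  proof
    fix x :: 'a
    have nn: "0 \<le> (\<Prod>b\<in>(Basis::'a set). inverse (1 + (x \<bullet> b)^2))" by (intro prod_nonneg) auto
    have "(\<Prod>b\<in>(Basis::'a set). ennreal (inverse (1 + (x \<bullet> b)^2))) = ennreal (\<Prod>b\<in>(Basis::'a set). inverse (1 + (x \<bullet> b)^2))"
      by (rule prod_ennreal) auto
    then show "ennreal (norm (gS x)) = (\<Prod>b\<in>(Basis::'a set). ennreal (inverse (1 + (x \<bullet> b)^2)))"
      using nn unfolding gS_def by simp
  qed
  have "(\<integral>\<^sup>+x. ennreal (norm (gS (x::'a))) \<partial>lborel) = (\<integral>\<^sup>+x. (\<Prod>b\<in>(Basis::'a set). ennreal (inverse (1 + (x \<bullet> b)^2))) \<partial>lborel)"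
    by (simp only: fe)
  also have "\<dots> = (\<Prod>b\<in>(Basis::'a set). (\<integral>\<^sup>+r. ennreal (inverse (1 + r^2)) \<partial>lborel))"
    by (rule nn_integral_lborel_prod) auto
  also have "\<dots> = (\<Prod>b\<in>(Basis::'a set). ennreal (\<integral>r. inverse (1 + r^2) \<partial>lborel))"
    by (intro prod.cong refl nn_integral_eq_integral int_h) auto
  also have "\<dots> < \<infinity>" by (simp add: power_less_top_ennreal)
  finally show ?thesis using m by (simp add: integrable_iff_bounded)
qed

lemma gS_bound:
  fixes x :: "'a::euclidean_space"
  shows "inverse ((1 + norm x) ^ (2 * DIM('a))) \<le> gS x"
proof -
  have "(\<Prod>b\<in>(Basis::'a set). 1 + (x \<bullet> b)^2) \<le> (\<Prod>b\<in>(Basis::'a set). (1 + norm x)^2)"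
  proof (intro prod_mono conjI)
    fix b :: 'a assume b: "b \<in> Basis"
    show "0 \<le> 1 + (x \<bullet> b)^2" by simp
    have "\<bar>x \<bullet> b\<bar> \<le> norm x" by (rule Basis_le_norm[OF b])
    then have "(x \<bullet> b)^2 \<le> (norm x)^2"
      by (metis abs_ge_zero power2_abs power_mono)
    also have "\<dots> \<le> (1 + norm x)^2 - 1" by (simp add: power2_eq_square algebra_simps)
    finally show "1 + (x \<bullet> b)^2 \<le> (1 + norm x)^2" by simp
  qed
  also have "\<dots> = (1 + norm x) ^ (2 * DIM('a))" by (simp add: power_mult)
  finally have le: "(\<Prod>b\<in>(Basis::'a set). 1 + (x \<bullet> b)^2) \<le> (1 + norm x) ^ (2 * DIM('a))" .
  have pos: "(\<Prod>b\<in>(Basis::'a set). 1 + (x \<bullet> b)^2) > 0"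
    by (intro prod_pos) (auto intro: add_pos_nonneg)
  have "inverse ((1 + norm x) ^ (2 * DIM('a))) \<le> inverse (\<Prod>b\<in>(Basis::'a set). 1 + (x \<bullet> b)^2)"
    using le pos by (intro le_imp_inverse_le) auto
  also have "\<dots> = gS x" unfolding gS_def using prod_inversef[of "\<lambda>b. 1 + (x \<bullet> b)^2" Basis] by (simp add: o_def)
  finally show ?thesis .
qed

lemma schwartz_pt:
  fixes \<psi> :: "'a::euclidean_space \<Rightarrow> complex"
  assumes "schwartz_fun \<psi>"
  shows "norm (\<psi> x) \<le> Sseminorm (2 * DIM('a)) \<psi> * gS x"
proof -
  let ?N = "2 * DIM('a)"
  have A: "(1 + norm x) ^ ?N * norm (\<psi> x) \<le> Sseminorm ?N \<psi>" by (rule Sseminorm_ge[OF assms])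
  have p: "(1 + norm x) ^ ?N > 0" by (intro zero_less_power) (simp add: add_pos_nonneg)
  have pnz: "(1 + norm x) ^ ?N \<noteq> 0" using p by linarith
  have "norm (\<psi> x) = inverse ((1 + norm x) ^ ?N) * ((1 + norm x) ^ ?N * norm (\<psi> x))"
    by (simp only: mult.assoc[symmetric] left_inverse[OF pnz] mult_1)
  also have "\<dots> \<le> gS x * Sseminorm ?N \<psi>"
  proof (rule mult_mono[OF gS_bound A])
    show "0 \<le> gS x" unfolding gS_def by (intro prod_nonneg) auto
    show "0 \<le> (1 + norm x) ^ ?N * norm (\<psi> x)" using p by simp
  qed
  finally show ?thesis by (simp add: mult.commute)
qed

lemma schwartz_int:
  fixes \<psi> :: "'a::euclidean_space \<Rightarrow> complex" and c :: "'a \<Rightarrow> complex"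
  assumes s: "schwartz_fun \<psi>" and cc: "continuous_on UNIV c" and c1: "\<And>x. norm (c x) \<le> 1"
  shows "integrable lborel (\<lambda>x. c x * \<psi> x)"
    and "norm (\<integral>x. c x * \<psi> x \<partial>lborel) \<le> (\<integral>x. gS (x::'a) \<partial>lborel) * Sseminorm (2 * DIM('a)) \<psi>"
proof -
  let ?S = "Sseminorm (2 * DIM('a)) \<psi>"
  have cpsi: "continuous_on UNIV \<psi>" using s unfolding schwartz_fun_def by (auto intro: smooth_cont)
  have pt: "norm (c x * \<psi> x) \<le> ?S * gS x" for x
  proof -
    have "norm (c x * \<psi> x) \<le> norm (\<psi> x)"
      using c1[of x] by (simp add: norm_mult mult_left_le_one_le)
    also have "\<dots> \<le> ?S * gS x" by (rule schwartz_pt[OF s])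
    finally show ?thesis .
  qed
  have pt': "norm (c x * \<psi> x) \<le> norm (?S * gS x)" for x
    by (rule order_trans[OF pt]) simp
  have iS: "integrable lborel (\<lambda>x. ?S * gS x)" by (rule integrable_mult_right[OF int_gS])
  show i: "integrable lborel (\<lambda>x. c x * \<psi> x)"
  proof (rule Bochner_Integration.integrable_bound[OF iS])
    show "(\<lambda>x. c x * \<psi> x) \<in> borel_measurable lborel"
      using borel_measurable_continuous_onI[of "\<lambda>x. c x * \<psi> x"] cc cpsi
      by (simp add: continuous_on_mult)
    show "AE x in lborel. norm (c x * \<psi> x) \<le> norm (?S * gS x)"
      by (intro AE_I2 pt')
  qed
  have "norm (\<integral>x. c x * \<psi> x \<partial>lborel) \<le> (\<integral>x. norm (c x * \<psi> x) \<partial>lborel)"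
    by (rule integral_norm_bound)
  also have "\<dots> \<le> (\<integral>x. ?S * gS (x::'a) \<partial>lborel)"
  proof (rule Bochner_Integration.integral_mono[OF _ iS])
    show "integrable lborel (\<lambda>x. norm (c x * \<psi> x))" using i by simp
    show "norm (c x * \<psi> x) \<le> ?S * gS x" for x by (rule pt)
  qed
  also have "\<dots> = (\<integral>x. gS (x::'a) \<partial>lborel) * ?S" by simp
  finally show "norm (\<integral>x. c x * \<psi> x \<partial>lborel) \<le> (\<integral>x. gS (x::'a) \<partial>lborel) * ?S" .
qed



lemma basis_prod_cases:
  assumes "b \<in> (Basis :: ('a::euclidean_space \<times> 'b::euclidean_space) set)"
  obtains u where "u \<in> Basis" "b = (u, 0)" | v where "v \<in> Basis" "b = (0, v)"
  using assms unfolding Basis_prod_def by auto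

lemma smooth_fst:
  fixes h :: "'a::euclidean_space \<Rightarrow> complex"
  assumes "smooth_fun h" shows "smooth_fun (\<lambda>z::'a \<times> 'b::euclidean_space. h (fst z))"
proof -
  have "smooth_fun (\<lambda>z::'a \<times> 'b. 1 * h (fst z))"
  proof (rule smooth_lincomp[OF assms linear_fst])
    fix b :: "'a \<times> 'b" assume "b \<in> Basis"
    then show "\<exists>c b'. b' \<in> Basis \<and> fst b = c *\<^sub>R b'"
    proof (cases rule: basis_prod_cases)
      case (1 u) then show ?thesis by (intro exI[of _ 1] exI[of _ u]) auto
    next
      case (2 v)
      obtain b' :: 'a where "b' \<in> Basis" using nonempty_Basis by blast
      with 2 show ?thesis by (intro exI[of _ 0] exI[of _ b']) auto
    qed
  qed
  then show ?thesis by simp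
qed

lemma smooth_snd:
  fixes h :: "'b::euclidean_space \<Rightarrow> complex"
  assumes "smooth_fun h" shows "smooth_fun (\<lambda>z::'a::euclidean_space \<times> 'b. h (snd z))"
proof -
  have "smooth_fun (\<lambda>z::'a \<times> 'b. 1 * h (snd z))"
  proof (rule smooth_lincomp[OF assms linear_snd])
    fix b :: "'a \<times> 'b" assume "b \<in> Basis"
    then show "\<exists>c b'. b' \<in> Basis \<and> snd b = c *\<^sub>R b'"
    proof (cases rule: basis_prod_cases)
      case (2 v) then show ?thesis by (intro exI[of _ 1] exI[of _ v]) auto
    next
      case (1 u)
      obtain b' :: 'b where "b' \<in> Basis" using nonempty_Basis by blast
      with 1 show ?thesis by (intro exI[of _ 0] exI[of _ b']) auto
    qed
  qed
  then show ?thesis by simp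
qed

lemma tsupport_sub: "{x. f x \<noteq> 0} \<subseteq> S \<Longrightarrow> closed S \<Longrightarrow> tsupport f \<subseteq> S"
  unfolding tsupport_def by (rule closure_minimal)

lemma tensor_test:
  fixes \<phi> :: "real \<Rightarrow> complex" and \<psi> :: "'a::euclidean_space \<Rightarrow> complex"
  assumes f: "test_fun \<phi>" and g: "test_fun \<psi>"
  shows "test_fun (\<lambda>(x, t). \<phi> t * \<psi> x)"
proof -
  have e: "(\<lambda>(x, t). \<phi> t * \<psi> x) = (\<lambda>z::'a \<times> real. \<phi> (snd z) * \<psi> (fst z))" by auto
  have s: "smooth_fun (\<lambda>z::'a \<times> real. \<phi> (snd z) * \<psi> (fst z))"
    using f g unfolding test_fun_def by (intro smooth_mult smooth_fst smooth_snd) auto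
  have sub: "tsupport (\<lambda>z::'a \<times> real. \<phi> (snd z) * \<psi> (fst z)) \<subseteq> tsupport \<psi> \<times> tsupport \<phi>"
  proof (rule tsupport_sub)
    show "{z::'a \<times> real. \<phi> (snd z) * \<psi> (fst z) \<noteq> 0} \<subseteq> tsupport \<psi> \<times> tsupport \<phi>"
      by (auto intro: tsupport_in simp: mem_Times_iff)
    show "closed (tsupport \<psi> \<times> tsupport \<phi>)" by (intro closed_Times closed_tsupport)
  qed
  have "compact (tsupport \<psi> \<times> tsupport \<phi>)" using f g unfolding test_fun_def by (intro compact_Times) auto
  then have "compact (tsupport (\<lambda>z::'a \<times> real. \<phi> (snd z) * \<psi> (fst z)))" by (rule compact_sub[OF _ sub])
  with s show ?thesis unfolding e test_fun_def by simp
qed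

definition Apart :: "(real \<Rightarrow> complex) \<Rightarrow> complex" where
  "Apart \<phi> = (\<integral>t. WC 0 t * \<phi> t \<partial>lborel)"

definition Tpart :: "real^'d \<Rightarrow> (real^'d \<Rightarrow> complex) \<Rightarrow> complex" where
  "Tpart y \<psi> = (\<integral>x. exp (\<i> * of_real (y \<bullet> x)) * \<psi> x \<partial>lborel)"

definition uu :: "real^'d \<Rightarrow> (real \<Rightarrow> complex) \<Rightarrow> (real^'d \<Rightarrow> complex) \<Rightarrow> complex" where
  "uu y \<phi> \<psi> = (if test_fun \<phi> \<and> schwartz_fun \<psi> then Apart \<phi> * Tpart y \<psi> else 0)"

lemma cont_exp: "continuous_on UNIV (\<lambda>x. exp (\<i> * of_real (y \<bullet> x)))"
  by (intro continuous_intros)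

lemma tensor_int:
  fixes y :: "real^'d::finite"
  assumes f: "test_fun \<phi>" and g: "test_fun \<psi>"
  shows "Uw y 0 (\<lambda>(x, t). \<phi> t * \<psi> x) = Apart \<phi> * Tpart y \<psi>"
proof -
  let ?F = "\<lambda>z. Phi y 0 z * (case z of (x, t) \<Rightarrow> \<phi> t * \<psi> x)"
  have iF: "integrable lborel ?F" by (rule test_int[OF cont_Phi tensor_test[OF f g]])
  then have iF2: "integrable (lborel \<Otimes>\<^sub>M lborel) ?F" by (simp add: lborel_prod)
  have "Uw y 0 (\<lambda>(x, t). \<phi> t * \<psi> x) = (\<integral>z. ?F z \<partial>lborel)"
    using tensor_test[OF f g] by (simp add: Uw_def)
  also have "\<dots> = (\<integral>z. ?F z \<partial>(lborel \<Otimes>\<^sub>M lborel))" by (simp add: lborel_prod)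
  also have "\<dots> = (\<integral>x. (\<integral>t. ?F (x, t) \<partial>lborel) \<partial>lborel)"
    by (rule lborel_pair.integral_fst'[OF iF2, symmetric])
  also have "\<dots> = (\<integral>x. (exp (\<i> * of_real (y \<bullet> x)) * \<psi> x) * Apart \<phi> \<partial>lborel)"
  proof (rule Bochner_Integration.integral_cong[OF refl])
    fix x
    have "(\<integral>t. ?F (x, t) \<partial>lborel) = (\<integral>t. (exp (\<i> * of_real (y \<bullet> x)) * \<psi> x) * (WC 0 t * \<phi> t) \<partial>lborel)"
      by (rule Bochner_Integration.integral_cong) (auto simp: Phi_def)
    also have "\<dots> = (exp (\<i> * of_real (y \<bullet> x)) * \<psi> x) * Apart \<phi>"
      unfolding Apart_def by (rule integral_mult_right_zero)
    finally show "(\<integral>t. ?F (x, t) \<partial>lborel) = (exp (\<i> * of_real (y \<bullet> x)) * \<psi> x) * Apart \<phi>" .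
  qed
  also have "\<dots> = Tpart y \<psi> * Apart \<phi>"
    unfolding Tpart_def by (rule integral_mult_left_zero)
  finally show ?thesis by (simp add: mult.commute)
qed

lemma Tpart_props:
  fixes y :: "real^'d::finite"
  assumes "schwartz_fun \<psi>"
  shows "integrable lborel (\<lambda>x. exp (\<i> * of_real (y \<bullet> x)) * \<psi> x)"
    and "norm (Tpart y \<psi>) \<le> (\<integral>x. gS (x::real^'d) \<partial>lborel) * Sseminorm (2 * DIM(real^'d)) \<psi>"
  using schwartz_int[OF assms cont_exp, of y] unfolding Tpart_def
  by (auto simp: norm_exp_i_times)

lemma Tpart_lin:
  fixes y :: "real^'d::finite"
  assumes "schwartz_fun \<psi>" "schwartz_fun g"
  shows "Tpart y (\<lambda>x. a * \<psi> x + b * g x) = a * Tpart y \<psi> + b * Tpart y g"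
proof -
  have "Tpart y (\<lambda>x. a * \<psi> x + b * g x) =
     (\<integral>x. a * (exp (\<i> * of_real (y \<bullet> x)) * \<psi> x) + b * (exp (\<i> * of_real (y \<bullet> x)) * g x) \<partial>lborel)"
    unfolding Tpart_def by (simp add: algebra_simps)
  also have "\<dots> = a * Tpart y \<psi> + b * Tpart y g"
    unfolding Tpart_def using Tpart_props(1)[OF assms(1)] Tpart_props(1)[OF assms(2)]
    by (simp add: Bochner_Integration.integral_add)
  finally show ?thesis .
qed

lemma Apart_lin:
  assumes "test_fun \<phi>" "test_fun g"
  shows "Apart (\<lambda>x. a * \<phi> x + b * g x) = a * Apart \<phi> + b * Apart g"
proof -
  have "Apart (\<lambda>x. a * \<phi> x + b * g x) = (\<integral>t. a * (WC 0 t * \<phi> t) + b * (WC 0 t * g t) \<partial>lborel)"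
    unfolding Apart_def by (simp add: algebra_simps)
  also have "\<dots> = a * Apart \<phi> + b * Apart g"
    unfolding Apart_def using test_int[OF cont_WC assms(1)] test_int[OF cont_WC assms(2)]
    by (simp add: Bochner_Integration.integral_add)
  finally show ?thesis .
qed

lemma uu_stm:
  fixes y :: "real^'d::finite"
  shows "spat_tempered_map (uu y)"
  unfolding spat_tempered_map_def
proof (intro conjI allI impI)
  fix \<phi> :: "real \<Rightarrow> complex" assume "\<not> test_fun \<phi>"
  then show "uu y \<phi> = (\<lambda>_. 0)" by (auto simp: uu_def)
next
  fix \<phi> :: "real \<Rightarrow> complex" assume f: "test_fun \<phi>"
  show "tempered (uu y \<phi>)"
    unfolding tempered_def
  proof (intro conjI allI impI)
    fix \<psi> :: "real^'d \<Rightarrow> complex" assume "\<not> schwartz_fun \<psi>"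
    then show "uu y \<phi> \<psi> = 0" by (simp add: uu_def)
  next
    fix \<psi> g :: "real^'d \<Rightarrow> complex" and a b :: complex
    assume s1: "schwartz_fun \<psi>" and s2: "schwartz_fun g"
    show "uu y \<phi> (\<lambda>x. a * \<psi> x + b * g x) = a * uu y \<phi> \<psi> + b * uu y \<phi> g"
      using f s1 s2 schwartz_lin[OF s1 s2, of a b] Tpart_lin[OF s1 s2, of y a b]
      by (simp add: uu_def algebra_simps)
  next
    show "\<exists>C N. \<forall>\<psi>. schwartz_fun \<psi> \<longrightarrow> norm (uu y \<phi> \<psi>) \<le> C * Sseminorm N \<psi>"
    proof (intro exI allI impI)
      fix \<psi> :: "real^'d \<Rightarrow> complex" assume s: "schwartz_fun \<psi>"
      have "norm (uu y \<phi> \<psi>) = norm (Apart \<phi>) * norm (Tpart y \<psi>)"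
        using f s by (simp add: uu_def norm_mult)
      also have "\<dots> \<le> norm (Apart \<phi>) * ((\<integral>x. gS (x::real^'d) \<partial>lborel) * Sseminorm (2 * DIM(real^'d)) \<psi>)"
        by (intro mult_left_mono Tpart_props(2)[OF s]) auto
      finally show "norm (uu y \<phi> \<psi>) \<le> (norm (Apart \<phi>) * (\<integral>x. gS (x::real^'d) \<partial>lborel)) * Sseminorm (2 * DIM(real^'d)) \<psi>"
        by (simp add: mult.assoc)
    qed
  qed
next
  fix \<phi> g :: "real \<Rightarrow> complex" and a b :: complex
  assume f: "test_fun \<phi>" and g: "test_fun g"
  show "uu y (\<lambda>t. a * \<phi> t + b * g t) = (\<lambda>\<psi>. a * uu y \<phi> \<psi> + b * uu y g \<psi>)"
  proof
    fix \<psi>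
    show "uu y (\<lambda>t. a * \<phi> t + b * g t) \<psi> = a * uu y \<phi> \<psi> + b * uu y g \<psi>"
      using f g test_lin[OF f g, of a b] Apart_lin[OF f g, of a b]
      by (simp add: uu_def algebra_simps)
  qed
next
  fix \<psi> :: "real^'d \<Rightarrow> complex" assume s: "schwartz_fun \<psi>"
  have cP: "continuous_on UNIV (\<lambda>t. WC 0 t * Tpart y \<psi>)" by (intro continuous_intros cont_WC)
  have "(\<lambda>\<phi>. uu y \<phi> \<psi>) = (\<lambda>\<phi>. if test_fun \<phi> then \<integral>t. (WC 0 t * Tpart y \<psi>) * \<phi> t \<partial>lborel else 0)"
  proof
    fix \<phi> :: "real \<Rightarrow> complex"
    have "(\<integral>t. (WC 0 t * Tpart y \<psi>) * \<phi> t \<partial>lborel) = (\<integral>t. (WC 0 t * \<phi> t) * Tpart y \<psi> \<partial>lborel)"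
      by (simp add: algebra_simps)
    also have "\<dots> = Apart \<phi> * Tpart y \<psi>" unfolding Apart_def by (rule integral_mult_left_zero)
    finally show "uu y \<phi> \<psi> = (if test_fun \<phi> then \<integral>t. (WC 0 t * Tpart y \<psi>) * \<phi> t \<partial>lborel else 0)"
      using s by (simp add: uu_def)
  qed
  then show "distribution (\<lambda>\<phi>. uu y \<phi> \<psi>)" using dist_weight[OF cP] by simp
qed

lemma U_LDS:
  fixes y :: "real^'d::finite"
  shows "Uw y 0 \<in> LDS"
  unfolding LDS_def
proof (intro CollectI conjI exI[of _ "uu y"])
  show "distribution (Uw y 0)"
    using dist_weight[OF cont_Phi, of y 0] by (simp add: Uw_def[abs_def])
  show "spat_tempered_map (uu y)" by (rule uu_stm)
  show "\<forall>\<phi> \<psi>. test_fun \<phi> \<longrightarrow> test_fun \<psi> \<longrightarrow> Uw y 0 (\<lambda>(x, t). \<phi> t * \<psi> x) = uu y \<phi> \<psi>"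
  proof (intro allI impI)
    fix \<phi> :: "real \<Rightarrow> complex" and \<psi> :: "real^'d \<Rightarrow> complex"
    assume f: "test_fun \<phi>" and g: "test_fun \<psi>"
    then have "uu y \<phi> \<psi> = Apart \<phi> * Tpart y \<psi>" by (simp add: uu_def test_schwartz)
    then show "Uw y 0 (\<lambda>(x, t). \<phi> t * \<psi> x) = uu y \<phi> \<psi>" using tensor_int[OF f g] by simp
  qed
qed

lemma U_neg:
  fixes y :: "real^'d::finite"
  shows "vanishes_neg_time (Uw y 0)"
  unfolding vanishes_neg_time_def
proof (intro allI impI)
  fix \<phi> :: "(real^'d) \<times> real \<Rightarrow> complex"
  assume a: "test_fun \<phi> \<and> tsupport \<phi> \<subseteq> {z. snd z < 0}"
  have "Phi y 0 z * \<phi> z = 0" for z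
  proof (cases "snd z \<le> 0")
    case True then show ?thesis by (simp add: Phi_def WC_def Wf_zero)
  next
    case False
    then have "z \<notin> tsupport \<phi>" using a by auto
    then have "\<phi> z = 0" by (rule tsupport_out)
    then show ?thesis by simp
  qed
  then have "(\<lambda>z. Phi y 0 z * \<phi> z) = (\<lambda>z. 0)" by (rule ext)
  then show "Uw y 0 \<phi> = 0" using a by (simp add: Uw_def)
qed



lemma int_cs_real:
  fixes F :: "'a::euclidean_space \<Rightarrow> real"
  assumes "continuous_on UNIV F" "compact K" "\<And>x. x \<notin> K \<Longrightarrow> F x = 0"
  shows "integrable lborel F"
proof -
  have "integrable lborel (\<lambda>x. indicator K x *\<^sub>R F x)"
    by (rule borel_integrable_compact[OF assms(2) continuous_on_subset[OF assms(1)]]) auto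
  moreover have "(\<lambda>x. indicator K x *\<^sub>R F x) = F"
  proof
    fix x show "indicator K x *\<^sub>R F x = F x" by (cases "x \<in> K") (auto simp: assms(3))
  qed
  ultimately show ?thesis by simp
qed

lemma cont_Wf: "continuous_on UNIV (Wf n)"
  by (intro continuous_at_imp_continuous_on ballI DERIV_isCont[OF Wf_deriv])

lemma smooth_prod:
  fixes f :: "'i \<Rightarrow> 'a::euclidean_space \<Rightarrow> complex"
  assumes "finite S" "\<And>i. i \<in> S \<Longrightarrow> smooth_fun (f i)"
  shows "smooth_fun (\<lambda>x. \<Prod>i\<in>S. f i x)"
  using assms
proof (induct S rule: finite_induct)
  case empty then show ?case by (simp add: smooth_const)
next
  case (insert i S)
  then show ?case by (simp add: smooth_mult)
qed

lemma smooth_refl: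
  fixes h :: "real \<Rightarrow> complex"
  assumes "smooth_fun h" shows "smooth_fun (\<lambda>s. h (- s))"
proof -
  have "smooth_fun (\<lambda>s. 1 * h (uminus s))"
  proof (rule smooth_lincomp[OF assms])
    show "linear (uminus :: real \<Rightarrow> real)" by (rule linear_uminus)
    fix b :: real assume "b \<in> Basis"
    then show "\<exists>c b'. b' \<in> Basis \<and> - b = c *\<^sub>R b'" by (intro exI[of _ "-1"] exI[of _ 1]) auto
  qed
  then show ?thesis by simp
qed

lemma smooth_inner:
  fixes h :: "real \<Rightarrow> complex" and v :: "'a::euclidean_space"
  assumes "smooth_fun h" shows "smooth_fun (\<lambda>x. h (x \<bullet> v))"
proof -
  have "smooth_fun (\<lambda>x. 1 * h ((\<lambda>x. x \<bullet> v) x))"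
  proof (rule smooth_lincomp[OF assms])
    show "linear (\<lambda>x::'a. x \<bullet> v)" by (rule bounded_linear.linear[OF bounded_linear_inner_left])
    fix b :: 'a assume "b \<in> Basis"
    then show "\<exists>c b'. b' \<in> Basis \<and> b \<bullet> v = c *\<^sub>R b'" by (intro exI[of _ "b \<bullet> v"] exI[of _ 1]) auto
  qed
  then show ?thesis by simp
qed

definition EF :: "nat \<Rightarrow> real \<Rightarrow> complex" where "EF n r = (- \<i>) ^ n * exp (- (\<i> * of_real r))"

lemma smooth_EF: "smooth_fun (EF 0)"
proof (rule smooth1_seq)
  fix n x
  have "((\<lambda>z. (- \<i>) ^ n * exp (- (\<i> * z))) has_field_derivative (- \<i>) ^ Suc n * exp (- (\<i> * of_real x))) (at (of_real x))"
    by (auto intro!: derivative_eq_intros simp: algebra_simps)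
  from has_vector_derivative_real_field[OF this]
  show "(EF n has_vector_derivative EF (Suc n) x) (at x)" unfolding EF_def by simp
qed

definition tb :: "real \<Rightarrow> complex" where "tb t = WC 0 (t - 1) * WC 0 (3 - t)"

definition xb :: "real^'d \<Rightarrow> real^'d \<Rightarrow> complex" where
  "xb y x = EF 0 (x \<bullet> y) * (\<Prod>b\<in>Basis. WC 0 (x \<bullet> b + 1) * WC 0 (1 - x \<bullet> b))"

lemma test_tb: "test_fun tb"
  unfolding test_fun_def
proof
  have s1: "smooth_fun (\<lambda>t. WC 0 (t + -1))" by (rule smooth_translate[OF smooth_WC])
  have s2: "smooth_fun (\<lambda>t. (\<lambda>s. WC 0 (s + 3)) (- t))" by (rule smooth_refl[OF smooth_translate[OF smooth_WC]])
  have "tb = (\<lambda>t. WC 0 (t + -1) * (\<lambda>s. WC 0 (s + 3)) (- t))" unfolding tb_def by (auto simp: algebra_simps)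
  then show "smooth_fun tb" using smooth_mult[OF s1 s2] by simp
  have "tsupport tb \<subseteq> {1..3}"
  proof (rule tsupport_sub)
    show "{x. tb x \<noteq> 0} \<subseteq> {1..3}"
      by (auto simp: tb_def WC_def Wf_def split: if_splits)
  qed auto
  then show "compact (tsupport tb)" by (rule compact_sub[OF compact_Icc])
qed

lemma test_xb:
  fixes y :: "real^'d::finite"
  shows "test_fun (xb y)"
  unfolding test_fun_def
proof
  have s1: "smooth_fun (\<lambda>x::real^'d. EF 0 (x \<bullet> y))" by (rule smooth_inner[OF smooth_EF])
  have sb: "smooth_fun (\<lambda>x::real^'d. WC 0 (x \<bullet> b + 1) * WC 0 (1 - x \<bullet> b))" for b :: "real^'d"
  proof -
    have a1: "smooth_fun (\<lambda>x::real^'d. (\<lambda>s. WC 0 (s + 1)) (x \<bullet> b))"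
      by (rule smooth_inner[OF smooth_translate[OF smooth_WC]])
    have a2: "smooth_fun (\<lambda>x::real^'d. (\<lambda>t. (\<lambda>s. WC 0 (s + 1)) (- t)) (x \<bullet> b))"
      by (rule smooth_inner[OF smooth_refl[OF smooth_translate[OF smooth_WC]]])
    show ?thesis using smooth_mult[OF a1 a2] by (simp add: algebra_simps)
  qed
  show "smooth_fun (xb y)" unfolding xb_def[abs_def]
    by (intro smooth_mult s1 smooth_prod sb) auto
  have "tsupport (xb y) \<subseteq> cbox (- One) One"
  proof (rule tsupport_sub)
    show "{x. xb y x \<noteq> 0} \<subseteq> cbox (- One) One"
    proof
      fix x assume "x \<in> {x. xb y x \<noteq> 0}"
      then have "(\<Prod>b\<in>Basis. WC 0 (x \<bullet> b + 1) * WC 0 (1 - x \<bullet> b)) \<noteq> 0" by (auto simp: xb_def)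
      then have "\<forall>b\<in>Basis. WC 0 (x \<bullet> b + 1) * WC 0 (1 - x \<bullet> b) \<noteq> 0" by auto
      then show "x \<in> cbox (- One) One"
        unfolding mem_box by (auto simp: WC_def Wf_def inner_sum_Basis split: if_splits)
    qed
  qed auto
  then show "compact (tsupport (xb y))" by (rule compact_sub[OF compact_cbox])
qed

lemma Apart_tb: "Apart tb \<noteq> 0"
proof -
  let ?g = "\<lambda>t. Wf 0 t * (Wf 0 (t - 1) * Wf 0 (3 - t))"
  have e: "Apart tb = of_real (\<integral>t. ?g t \<partial>lborel)"
    unfolding Apart_def tb_def WC_def by (subst integral_complex_of_real[symmetric]) simp
  have cg: "continuous_on UNIV ?g"
    by (intro continuous_intros continuous_on_compose2[OF cont_Wf]) auto
  have "(\<integral>t. ?g t \<partial>lborel) > 0"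
  proof (rule int_pos[OF cg _ _, of 2])
    show "integrable lborel ?g"
      by (rule int_cs_real[OF cg compact_Icc[of 1 3]]) (auto simp: Wf_def)
    show "0 \<le> ?g t" for t by (simp add: Wf_def)
    show "0 < ?g 2" by (simp add: Wf_def)
  qed
  then show ?thesis unfolding e by simp
qed

lemma Tpart_xb:
  fixes y :: "real^'d::finite"
  shows "Tpart y (xb y) \<noteq> 0"
proof -
  let ?g = "\<lambda>x::real^'d. \<Prod>b\<in>Basis. Wf 0 (x \<bullet> b + 1) * Wf 0 (1 - x \<bullet> b)"
  have pt: "exp (\<i> * of_real (y \<bullet> x)) * xb y x = of_real (?g x)" for x
  proof -
    have "exp (\<i> * of_real (y \<bullet> x)) * EF 0 (x \<bullet> y) = 1"
      by (simp add: EF_def inner_commute exp_add[symmetric])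
    then show ?thesis unfolding xb_def WC_def
      by (simp add: mult.assoc[symmetric])
  qed
  have e: "Tpart y (xb y) = of_real (\<integral>x. ?g x \<partial>lborel)"
    unfolding Tpart_def pt by (subst integral_complex_of_real[symmetric]) simp
  have cg: "continuous_on UNIV ?g"
    by (intro continuous_on_prod ballI continuous_intros continuous_on_compose2[OF cont_Wf]) auto
  have "(\<integral>x. ?g x \<partial>lborel) > 0"
  proof (rule int_pos[OF cg _ _, of 0])
    show "integrable lborel ?g"
    proof (rule int_cs_real[OF cg compact_cbox[of "- One" One]])
      fix x :: "real^'d" assume "x \<notin> cbox (- One) One"
      then obtain b :: "real^'d" where b: "b \<in> Basis" "\<not> (- 1 \<le> x \<bullet> b \<and> x \<bullet> b \<le> 1)"
        unfolding mem_box by (auto simp: inner_sum_Basis)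
      then have "Wf 0 (x \<bullet> b + 1) * Wf 0 (1 - x \<bullet> b) = 0" by (auto simp: Wf_def)
      then show "?g x = 0" using b(1) by (intro prod_zero) auto
    qed
    show "0 \<le> ?g x" for x by (intro prod_nonneg) (auto simp: Wf_def)
    show "0 < ?g 0" by (intro prod_pos) (auto simp: Wf_def)
  qed
  then show ?thesis unfolding e by simp
qed

lemma U_nonzero:
  fixes y :: "real^'d::finite"
  shows "Uw y 0 \<noteq> (\<lambda>_. 0)"
proof
  assume "Uw y 0 = (\<lambda>_. 0)"
  then have "Uw y 0 (\<lambda>(x, t). tb t * xb y x) = 0" by simp
  moreover have "Uw y 0 (\<lambda>(x, t). tb t * xb y x) = Apart tb * Tpart y (xb y)"
    by (rule tensor_int[OF test_tb test_xb])
  ultimately show False using Apart_tb Tpart_xb[of y] by simp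
qed



theorem theorem1p9:
  fixes p :: "('d::finite) mpoly poly"
  assumes "Nsp (LDS :: (((real^'d) \<times> real \<Rightarrow> complex) \<Rightarrow> complex) set) p = {\<lambda>_. 0}"
  shows "Vzero (Xcontent p) \<inter> (imag_axis_space :: (complex^'d) set) = {}"
proof (rule ccontr)
  assume "Vzero (Xcontent p) \<inter> (imag_axis_space :: (complex^'d) set) \<noteq> {}"
  then obtain \<xi> :: "complex^'d" where x1: "\<xi> \<in> Vzero (Xcontent p)" and x2: "\<xi> \<in> imag_axis_space" by blast
  from x2 obtain y :: "real^'d" where y: "\<xi> = (\<chi> i. \<i> * complex_of_real (y $ i))"
    unfolding imag_axis_space_def by blast
  have Z: "mpeval (coeff p j) (\<chi> k. \<i> * of_real (y $ k)) = 0" if j: "j \<le> degree p" for j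
  proof -
    have "coeff p j \<in> Xcontent p"
      unfolding Xcontent_def ideal_gen_def
    proof (intro CollectI exI conjI)
      show "coeff p j = (\<Sum>a\<in>{coeff p j}. (\<lambda>_. 1) a * a)" by simp
      show "finite {coeff p j}" by simp
      show "{coeff p j} \<subseteq> {coeff p j |j. j \<le> degree p}" using j by auto
    qed
    then show ?thesis using x1 y unfolding Vzero_def by blast
  qed
  have "Uw y 0 \<in> Nsp (LDS :: (((real^'d) \<times> real \<Rightarrow> complex) \<Rightarrow> complex) set) p"
    unfolding Nsp_def using U_LDS[of y] Dop_U[of p y, OF Z] U_neg[of y] by blast
  then have "Uw y 0 = (\<lambda>_. 0)" using assms by blast
  then show False using U_nonzero[of y] by blast
qed


end
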